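(* There is a Lebesgue measurable set $L\subseteq\mathbb{R}$ such that $\mathbb{R}_L$ is not Lebesgue measurable.
   Context: For $A\subseteq\mathbb{R}$, $\mathbb{R}_A$ is the set of all reals Turing equivalent to some element of $A$. *)

theory Defs
  imports "HOL-Analysis.Analysis" "HOL-Library.Nat_Bijection"
begin

datatype recf =
    Zero
  | Succ
  | Proj nat
  | Comp recf "recf list"
  | Prec recf recf
  | Mn recf
  | Oracle

inductive oracle_eval :: "(nat \<Rightarrow> bool) \<Rightarrow> recf \<Rightarrow> nat list \<Rightarrow> nat \<Rightarrow> bool"
  for A :: "nat \<Rightarrow> bool" where
  ev_zero: "oracle_eval A Zero xs 0"
| ev_succ: "oracle_eval A Succ (x # xs) (Suc x)"
| ev_proj: "i < length xs \<Longrightarrow> oracle_eval A (Proj i) xs (xs ! i)"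
| ev_oracle: "oracle_eval A Oracle (x # xs) (if A x then 1 else 0)"
| ev_comp: "list_all2 (\<lambda>g y. oracle_eval A g xs y) gs ys \<Longrightarrow> oracle_eval A f ys z
            \<Longrightarrow> oracle_eval A (Comp f gs) xs z"
| ev_prec0: "oracle_eval A f xs y \<Longrightarrow> oracle_eval A (Prec f g) (0 # xs) y"
| ev_precS: "oracle_eval A (Prec f g) (n # xs) y \<Longrightarrow> oracle_eval A g (n # y # xs) z
            \<Longrightarrow> oracle_eval A (Prec f g) (Suc n # xs) z"
| ev_mn: "oracle_eval A f (n # xs) 0 \<Longrightarrow> (\<forall>m<n. \<exists>y. oracle_eval A f (m # xs) (Suc y))
            \<Longrightarrow> oracle_eval A (Mn f) xs n"
monos list.rel_mono

definition turing_reducible :: "(nat \<Rightarrow> bool) \<Rightarrow> (nat \<Rightarrow> bool) \<Rightarrow> bool" where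
  "turing_reducible B A \<longleftrightarrow> (\<exists>f. \<forall>n. oracle_eval A f [n] (if B n then 1 else 0))"

definition turing_equiv_set :: "(nat \<Rightarrow> bool) \<Rightarrow> (nat \<Rightarrow> bool) \<Rightarrow> bool" where
  "turing_equiv_set A B \<longleftrightarrow> turing_reducible A B \<and> turing_reducible B A"

section \<open>Reals as sets of naturals (lower Dedekind cut)\<close>

text \<open>Fixed computable enumeration of the rationals (with repetitions).\<close>
definition rat_of_code :: "nat \<Rightarrow> real" where
  "rat_of_code n = (case prod_decode n of (i, k) \<Rightarrow> of_int (int_decode i) / real (Suc k))"

definition real_cut :: "real \<Rightarrow> nat \<Rightarrow> bool" where
  "real_cut x n \<longleftrightarrow> rat_of_code n < x"

definition turing_equiv_real :: "real \<Rightarrow> real \<Rightarrow> bool" where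
  "turing_equiv_real x y \<longleftrightarrow> turing_equiv_set (real_cut x) (real_cut y)"

definition turing_closure :: "real set \<Rightarrow> real set" where
  "turing_closure A = {y. \<exists>x\<in>A. turing_equiv_real y x}"

end

theory Submission
  imports Defs "HOL-Library.Countable"
begin

definition rc :: "(nat \<Rightarrow> bool) \<Rightarrow> nat \<Rightarrow> recf \<Rightarrow> (nat list \<Rightarrow> nat) \<Rightarrow> bool" where
  "rc A k f F \<longleftrightarrow> (\<forall>xs. length xs = k \<longrightarrow> oracle_eval A f xs (F xs))"

lemma rc_Zero: "rc A k Zero (\<lambda>_. 0)"
  by (auto simp: rc_def intro: oracle_eval.intros)

lemma rc_Proj: "i < k \<Longrightarrow> rc A k (Proj i) (\<lambda>xs. xs ! i)"
  by (auto simp: rc_def intro: oracle_eval.intros)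

lemma rc_Succ: "rc A (Suc 0) Succ (\<lambda>xs. Suc (xs ! 0))"
  unfolding rc_def
proof (intro allI impI)
  fix xs :: "nat list" assume "length xs = Suc 0"
  then obtain x where "xs = [x]" by (cases xs) auto
  then show "oracle_eval A Succ xs (Suc (xs ! 0))" by (auto intro: oracle_eval.intros)
qed

lemma rc_Oracle: "rc A (Suc 0) Oracle (\<lambda>xs. if A (xs ! 0) then 1 else 0)"
  unfolding rc_def
proof (intro allI impI)
  fix xs :: "nat list" assume "length xs = Suc 0"
  then obtain x where "xs = [x]" by (cases xs) auto
  then show "oracle_eval A Oracle xs (if A (xs ! 0) then 1 else 0)" using oracle_eval.ev_oracle[of A x "[]"] by simp
qed

lemma rc_Comp:
  assumes f: "rc A (length gs) f F" and gs: "list_all2 (\<lambda>g G. rc A k g G) gs Gs"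
  shows "rc A k (Comp f gs) (\<lambda>xs. F (map (\<lambda>G. G xs) Gs))"
  unfolding rc_def
proof (intro allI impI)
  fix xs :: "nat list" assume len: "length xs = k"
  have l: "length Gs = length gs" using gs by (simp add: list_all2_lengthD)
  have "list_all2 (\<lambda>g y. oracle_eval A g xs y) gs (map (\<lambda>G. G xs) Gs)"
    using gs len by (induction rule: list_all2_induct) (simp_all add: rc_def)
  moreover have "oracle_eval A f (map (\<lambda>G. G xs) Gs) (F (map (\<lambda>G. G xs) Gs))"
    using f l by (auto simp: rc_def)
  ultimately show "oracle_eval A (Comp f gs) xs (F (map (\<lambda>G. G xs) Gs))"
    by (rule oracle_eval.ev_comp)
qed

primrec precf :: "(nat list \<Rightarrow> nat) \<Rightarrow> (nat list \<Rightarrow> nat) \<Rightarrow> nat \<Rightarrow> nat list \<Rightarrow> nat" where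
  "precf F G 0 xs = F xs"
| "precf F G (Suc n) xs = G (n # precf F G n xs # xs)"

lemma rc_Prec:
  assumes f: "rc A k f F" and g: "rc A (Suc (Suc k)) g G"
  shows "rc A (Suc k) (Prec f g) (\<lambda>xs. precf F G (hd xs) (tl xs))"
  unfolding rc_def
proof (intro allI impI)
  fix xs :: "nat list" assume "length xs = Suc k"
  then obtain n ys where xs: "xs = n # ys" and ys: "length ys = k" by (cases xs) auto
  have "oracle_eval A (Prec f g) (n # ys) (precf F G n ys)"
  proof (induction n)
    case 0 then show ?case using f ys by (auto simp: rc_def intro: oracle_eval.ev_prec0)
  next
    case (Suc n)
    have "oracle_eval A g (n # precf F G n ys # ys) (G (n # precf F G n ys # ys))"
      using g ys by (auto simp: rc_def)
    then show ?case using Suc by (auto intro: oracle_eval.ev_precS)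
  qed
  then show "oracle_eval A (Prec f g) xs (precf F G (hd xs) (tl xs))" using xs by simp
qed

lemma rc_Mn:
  assumes f: "rc A (Suc k) f F" and ex: "\<And>xs. length xs = k \<Longrightarrow> \<exists>n. F (n # xs) = 0"
  shows "rc A k (Mn f) (\<lambda>xs. LEAST n. F (n # xs) = 0)"
  unfolding rc_def
proof (intro allI impI)
  fix xs :: "nat list" assume len: "length xs = k"
  define n where "n = (LEAST n. F (n # xs) = 0)"
  obtain n0 where "F (n0 # xs) = 0" using ex[OF len] by blast
  then have z: "F (n # xs) = 0" unfolding n_def by (rule LeastI)
  have ev: "\<And>m. oracle_eval A f (m # xs) (F (m # xs))" using f len by (simp add: rc_def)
  have "\<forall>m<n. \<exists>y. oracle_eval A f (m # xs) (Suc y)"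
  proof (intro allI impI)
    fix m assume "m < n"
    then have "F (m # xs) \<noteq> 0" unfolding n_def by (rule not_less_Least)
    then obtain y where "F (m # xs) = Suc y" by (cases "F (m # xs)") auto
    then show "\<exists>y. oracle_eval A f (m # xs) (Suc y)" using ev[of m] by auto
  qed
  then have "oracle_eval A (Mn f) xs n" using oracle_eval.ev_mn[of A f n xs] ev[of n] z by simp
  then show "oracle_eval A (Mn f) xs (LEAST n. F (n # xs) = 0)" by (simp add: n_def)
qed

lemma rc_cong: "rc A k f F \<Longrightarrow> (\<And>xs. length xs = k \<Longrightarrow> F xs = G xs) \<Longrightarrow> rc A k f G"
  by (simp add: rc_def)


lemma rc_Prec':
  assumes f: "rc A k f F" and g: "rc A (Suc (Suc k)) g G"
    and h0: "\<And>ys. length ys = k \<Longrightarrow> H (0 # ys) = F ys"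
    and hS: "\<And>n ys. length ys = k \<Longrightarrow> H (Suc n # ys) = G (n # H (n # ys) # ys)"
  shows "rc A (Suc k) (Prec f g) H"
proof (rule rc_cong[OF rc_Prec[OF f g]])
  fix xs :: "nat list" assume "length xs = Suc k"
  then obtain n ys where xs: "xs = n # ys" and ys: "length ys = k" by (cases xs) auto
  have "precf F G n ys = H (n # ys)"
    by (induction n) (simp_all add: h0 hS ys)
  then show "precf F G (hd xs) (tl xs) = H xs" using xs by simp
qed

lemma rc_c1: "rc A (Suc 0) f F \<Longrightarrow> rc A k g G \<Longrightarrow> rc A k (Comp f [g]) (\<lambda>xs. F [G xs])"
  using rc_Comp[of A "[g]" f F k "[G]"] by simp

lemma rc_c2: "rc A (Suc (Suc 0)) f F \<Longrightarrow> rc A k g1 G1 \<Longrightarrow> rc A k g2 G2 \<Longrightarrow>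
    rc A k (Comp f [g1, g2]) (\<lambda>xs. F [G1 xs, G2 xs])"
  using rc_Comp[of A "[g1, g2]" f F k "[G1, G2]"] by simp

lemma rc_c3: "rc A (Suc (Suc (Suc 0))) f F \<Longrightarrow> rc A k g1 G1 \<Longrightarrow> rc A k g2 G2 \<Longrightarrow> rc A k g3 G3 \<Longrightarrow>
    rc A k (Comp f [g1, g2, g3]) (\<lambda>xs. F [G1 xs, G2 xs, G3 xs])"
  using rc_Comp[of A "[g1, g2, g3]" f F k "[G1, G2, G3]"] by simp


primrec p_num :: "nat \<Rightarrow> recf" where
  "p_num 0 = Zero"
| "p_num (Suc n) = Comp Succ [p_num n]"

lemma rc_num: "rc A k (p_num c) (\<lambda>_. c)"
proof (induction c)
  case 0 then show ?case by (simp add: rc_Zero)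
next
  case (Suc c)
  show ?case using rc_c1[OF rc_Succ Suc] by simp
qed

definition "p_add = Prec (Proj 0) (Comp Succ [Proj 1])"
lemma rc_add: "rc A (Suc (Suc 0)) p_add (\<lambda>xs. xs ! 0 + xs ! 1)"
  unfolding p_add_def
  by (rule rc_Prec'[OF rc_Proj[of 0] rc_c1[OF rc_Succ rc_Proj[of 1]]]) auto

definition "p_mul = Prec Zero (Comp p_add [Proj 1, Proj 2])"
lemma rc_mul: "rc A (Suc (Suc 0)) p_mul (\<lambda>xs. xs ! 0 * xs ! 1)"
  unfolding p_mul_def 
  by (rule rc_Prec'[OF rc_Zero rc_c2[OF rc_add rc_Proj[of 1] rc_Proj[of 2]]]) auto

definition "p_pred = Prec Zero (Proj 0)"
lemma rc_pred: "rc A (Suc 0) p_pred (\<lambda>xs. xs ! 0 - 1)"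
  unfolding p_pred_def
  by (rule rc_Prec'[OF rc_Zero rc_Proj[of 0]]) auto

definition "p_monus = Prec (Proj 0) (Comp p_pred [Proj 1])"
lemma rc_monus: "rc A (Suc (Suc 0)) p_monus (\<lambda>xs. xs ! 1 - xs ! 0)"
  unfolding p_monus_def 
  by (rule rc_Prec'[OF rc_Proj[of 0] rc_c1[OF rc_pred rc_Proj[of 1]]]) auto

definition "p_sub = Comp p_monus [Proj 1, Proj 0]"
lemma rc_sub: "rc A (Suc (Suc 0)) p_sub (\<lambda>xs. xs ! 0 - xs ! 1)"
  unfolding p_sub_def 
  by (rule rc_cong[OF rc_c2[OF rc_monus rc_Proj[of 1] rc_Proj[of 0]]]) auto

definition "p_isz = Prec (p_num 1) Zero"
lemma rc_isz: "rc A (Suc 0) p_isz (\<lambda>xs. if xs ! 0 = 0 then 1 else 0)"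
  unfolding p_isz_def
  by (rule rc_Prec'[OF rc_num rc_Zero]) auto

definition "p_sg = Comp p_isz [p_isz]"
lemma rc_sg: "rc A (Suc 0) p_sg (\<lambda>xs. if xs ! 0 = 0 then 0 else 1)"
  unfolding p_sg_def
  by (rule rc_cong[OF rc_c1[OF rc_isz rc_isz]]) auto

definition "p_less = Comp p_sg [Comp p_sub [Proj 1, Proj 0]]"
lemma rc_less: "rc A (Suc (Suc 0)) p_less (\<lambda>xs. if xs ! 0 < xs ! 1 then 1 else 0)"
  unfolding p_less_def 
  by (rule rc_cong[OF rc_c1[OF rc_sg rc_c2[OF rc_sub rc_Proj[of 1] rc_Proj[of 0]]]]) auto

definition "p_if = Comp p_add [Comp p_mul [Proj 1, Comp p_sg [Proj 0]], Comp p_mul [Proj 2, Comp p_isz [Proj 0]]]"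
lemma rc_if: "rc A (Suc (Suc (Suc 0))) p_if (\<lambda>xs. if xs ! 0 \<noteq> 0 then xs ! 1 else xs ! 2)"
  unfolding p_if_def
  by (rule rc_cong[OF rc_c2[OF rc_add rc_c2[OF rc_mul rc_Proj[of 1] rc_c1[OF rc_sg rc_Proj[of 0]]]
     rc_c2[OF rc_mul rc_Proj[of 2] rc_c1[OF rc_isz rc_Proj[of 0]]]]]) auto

definition "p_pow2 = Prec (p_num 1) (Comp p_add [Proj 1, Proj 1])"
lemma rc_pow2: "rc A (Suc 0) p_pow2 (\<lambda>xs. 2 ^ (xs ! 0))"
  unfolding p_pow2_def
  by (rule rc_Prec'[OF rc_num rc_c2[OF rc_add rc_Proj[of 1] rc_Proj[of 1]]]) auto

definition "p_tri = Prec Zero (Comp p_add [Proj 1, Comp Succ [Proj 0]])"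
lemma rc_tri: "rc A (Suc 0) p_tri (\<lambda>xs. triangle (xs ! 0))"
  unfolding p_tri_def
  by (rule rc_Prec'[OF rc_Zero rc_c2[OF rc_add rc_Proj[of 1] rc_c1[OF rc_Succ rc_Proj[of 0]]]]) auto

definition "p_mod2 = Prec Zero (Comp p_isz [Proj 1])"
lemma rc_mod2: "rc A (Suc 0) p_mod2 (\<lambda>xs. xs ! 0 mod 2)"
  unfolding p_mod2_def
  by (rule rc_Prec'[OF rc_Zero rc_c1[OF rc_isz rc_Proj[of 1]]]) (auto simp: mod_Suc length_0_conv)

definition "p_div2 = Prec Zero (Comp p_add [Proj 1, Comp p_mod2 [Proj 0]])"
lemma rc_div2: "rc A (Suc 0) p_div2 (\<lambda>xs. xs ! 0 div 2)"
  unfolding p_div2_def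
  by (rule rc_Prec'[OF rc_Zero rc_c2[OF rc_add rc_Proj[of 1] rc_c1[OF rc_mod2 rc_Proj[of 0]]]]) (auto simp: div_Suc mod_Suc length_0_conv)


definition "p_penc = Comp p_add [Comp p_tri [Comp p_add [Proj 0, Proj 1]], Proj 0]"
lemma rc_penc: "rc A (Suc (Suc 0)) p_penc (\<lambda>xs. prod_encode (xs ! 0, xs ! 1))"
  unfolding p_penc_def
  by (rule rc_cong[OF rc_c2[OF rc_add rc_c1[OF rc_tri rc_c2[OF rc_add rc_Proj[of 0] rc_Proj[of 1]]] rc_Proj[of 0]]])
     (auto simp: prod_encode_def)

definition sfind :: "nat \<Rightarrow> nat" where "sfind n = (LEAST s. n < triangle (Suc s))"

lemma triangle_mono: "a \<le> b \<Longrightarrow> triangle a \<le> triangle b"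
  by (induction b) (auto simp: le_Suc_eq)

lemma prod_decode_sfind: "prod_decode n = (n - triangle (sfind n), sfind n - (n - triangle (sfind n)))"
proof -
  obtain i k where d: "prod_decode n = (i, k)" by (cases "prod_decode n")
  have n: "n = triangle (i + k) + i"
    using prod_decode_inverse[of n] d by (simp add: prod_encode_def)
  have "sfind n = i + k" unfolding sfind_def
  proof (rule Least_equality)
    show "n < triangle (Suc (i + k))" using n by simp
  next
    fix s assume "n < triangle (Suc s)"
    show "i + k \<le> s"
    proof (rule ccontr)
      assume "\<not> i + k \<le> s"
      then have "triangle (Suc s) \<le> triangle (i + k)" by (intro triangle_mono) simp
      then show False using \<open>n < triangle (Suc s)\<close> n by simp
    qed
  qed
  then show ?thesis using d n by simp
qed

definition "p_sfind = Mn (Comp p_isz [Comp p_less [Proj 1, Comp p_tri [Comp Succ [Proj 0]]]])"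
lemma rc_sfind: "rc A (Suc 0) p_sfind (\<lambda>xs. sfind (xs ! 0))"
proof -
  have f: "rc A (Suc (Suc 0)) (Comp p_isz [Comp p_less [Proj 1, Comp p_tri [Comp Succ [Proj 0]]]])
     (\<lambda>xs. if xs ! 1 < triangle (Suc (xs ! 0)) then 0 else 1)"
    by (rule rc_cong[OF rc_c1[OF rc_isz rc_c2[OF rc_less rc_Proj[of 1] rc_c1[OF rc_tri rc_c1[OF rc_Succ rc_Proj[of 0]]]]]]) auto
  have "rc A (Suc 0) p_sfind (\<lambda>xs. LEAST n. (if (n # xs) ! 1 < triangle (Suc ((n # xs) ! 0)) then 0 else 1) = (0::nat))"
    unfolding p_sfind_def
  proof (rule rc_Mn[OF f])
    fix xs :: "nat list" assume "length xs = Suc 0"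
    have "xs ! 0 < triangle (Suc (xs ! 0))" by (induction "xs ! 0") auto
    then show "\<exists>n. (if (n # xs) ! 1 < triangle (Suc ((n # xs) ! 0)) then 0 else 1) = (0::nat)"
      by (intro exI[of _ "xs ! 0"]) simp
  qed
  then show ?thesis by (rule rc_cong) (simp add: sfind_def)
qed

definition pdf :: "nat \<Rightarrow> nat" where "pdf n = fst (prod_decode n)"
definition pds :: "nat \<Rightarrow> nat" where "pds n = snd (prod_decode n)"

definition "p_pdf = Comp p_sub [Proj 0, Comp p_tri [p_sfind]]"
lemma rc_pdf: "rc A (Suc 0) p_pdf (\<lambda>xs. pdf (xs ! 0))"
  unfolding p_pdf_def
  by (rule rc_cong[OF rc_c2[OF rc_sub rc_Proj[of 0] rc_c1[OF rc_tri rc_sfind]]])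
     (auto simp: pdf_def prod_decode_sfind)

definition "p_pds = Comp p_sub [p_sfind, p_pdf]"
lemma rc_pds: "rc A (Suc 0) p_pds (\<lambda>xs. pds (xs ! 0))"
  unfolding p_pds_def
  by (rule rc_cong[OF rc_c2[OF rc_sub rc_sfind rc_pdf]])
     (auto simp: pdf_def pds_def prod_decode_sfind)

definition ipos :: "nat \<Rightarrow> nat" where "ipos i = (if even i then i div 2 else 0)"
definition ineg :: "nat \<Rightarrow> nat" where "ineg i = (if even i then 0 else i div 2 + 1)"

lemma int_decode_pos_neg: "int_decode i = int (ipos i) - int (ineg i)"
proof (cases "even i")
  case True
  then obtain a where "i = 2 * a" by blast
  moreover have "sum_decode (2 * a) = Inl a"
    using sum_encode_inverse[of "Inl a"] by (simp add: sum_encode_def)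
  ultimately show ?thesis by (simp add: int_decode_def ipos_def ineg_def)
next
  case False
  then obtain a where "i = 2 * a + 1" using oddE by blast
  moreover have "sum_decode (2 * a + 1) = Inr a"
    using sum_encode_inverse[of "Inr a"] by (simp add: sum_encode_def)
  ultimately show ?thesis by (simp add: int_decode_def ipos_def ineg_def)
qed

definition encdiff :: "nat \<Rightarrow> nat \<Rightarrow> nat" where
  "encdiff p q = (if q \<le> p then 2 * (p - q) else 2 * (q - p) - 1)"

lemma int_decode_encdiff: "int_decode (encdiff p q) = int p - int q"
proof (cases "q \<le> p")
  case True
  then show ?thesis using int_decode_pos_neg[of "encdiff p q"] by (simp add: encdiff_def ipos_def ineg_def)
next
  case False
  then have "encdiff p q = 2 * (q - p - 1) + 1" by (simp add: encdiff_def)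
  moreover have "odd (2 * (q - p - 1) + 1)" by simp
  ultimately show ?thesis using False int_decode_pos_neg[of "encdiff p q"]
    by (simp add: ipos_def ineg_def)
qed

definition "p_ipos = Comp p_if [Comp p_mod2 [Proj 0], Zero, Comp p_div2 [Proj 0]]"
lemma rc_ipos: "rc A (Suc 0) p_ipos (\<lambda>xs. ipos (xs ! 0))"
  unfolding p_ipos_def
  by (rule rc_cong[OF rc_c3[OF rc_if rc_c1[OF rc_mod2 rc_Proj[of 0]] rc_Zero rc_c1[OF rc_div2 rc_Proj[of 0]]]])
     (auto simp: ipos_def)

definition "p_ineg = Comp p_if [Comp p_mod2 [Proj 0], Comp Succ [Comp p_div2 [Proj 0]], Zero]"
lemma rc_ineg: "rc A (Suc 0) p_ineg (\<lambda>xs. ineg (xs ! 0))"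
  unfolding p_ineg_def
  by (rule rc_cong[OF rc_c3[OF rc_if rc_c1[OF rc_mod2 rc_Proj[of 0]] rc_c1[OF rc_Succ rc_c1[OF rc_div2 rc_Proj[of 0]]] rc_Zero]])
     (auto simp: ineg_def)

definition "p_encdiff = Comp p_if [Comp p_less [Proj 1, Comp Succ [Proj 0]],
   Comp p_add [Comp p_sub [Proj 0, Proj 1], Comp p_sub [Proj 0, Proj 1]],
   Comp p_pred [Comp p_add [Comp p_sub [Proj 1, Proj 0], Comp p_sub [Proj 1, Proj 0]]]]"
lemma rc_encdiff: "rc A (Suc (Suc 0)) p_encdiff (\<lambda>xs. encdiff (xs ! 0) (xs ! 1))"
  unfolding p_encdiff_def
  by (rule rc_cong[OF rc_c3[OF rc_if rc_c2[OF rc_less rc_Proj[of 1] rc_c1[OF rc_Succ rc_Proj[of 0]]]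
     rc_c2[OF rc_add rc_c2[OF rc_sub rc_Proj[of 0] rc_Proj[of 1]] rc_c2[OF rc_sub rc_Proj[of 0] rc_Proj[of 1]]]
     rc_c1[OF rc_pred rc_c2[OF rc_add rc_c2[OF rc_sub rc_Proj[of 1] rc_Proj[of 0]] rc_c2[OF rc_sub rc_Proj[of 1] rc_Proj[of 0]]]]]])
     (auto simp: encdiff_def)

lemma rat_of_code_alt: "rat_of_code n = (real (ipos (pdf n)) - real (ineg (pdf n))) / real (Suc (pds n))"
  by (simp add: rat_of_code_def pdf_def pds_def int_decode_pos_neg split: prod.splits)


lemma rc_red: assumes "rc A (Suc 0) f (\<lambda>xs. if B (xs ! 0) then 1 else 0)" shows "turing_reducible B A"
proof -
  have "oracle_eval A f [n] (if B ([n] ! 0) then 1 else 0)" for n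
    using assms[unfolded rc_def, rule_format, of "[n]"] by simp
  then show ?thesis unfolding turing_reducible_def by (intro exI[of _ f]) simp
qed

lemma pdf_penc[simp]: "pdf (prod_encode (a, b)) = a" by (simp add: pdf_def)
lemma pds_penc[simp]: "pds (prod_encode (a, b)) = b" by (simp add: pds_def)

lemma red_by_map:
  assumes G: "\<And>A. rc A (Suc 0) G (\<lambda>xs. g (xs ! 0))" and e: "\<And>n. B n \<longleftrightarrow> A (g n)"
  shows "turing_reducible B A"
  by (rule rc_red[OF rc_cong[OF rc_c1[OF rc_Oracle G]]]) (simp add: e)

lemma rat_of_code_penc: "rat_of_code (prod_encode (i, k)) = int_decode i / real (Suc k)"
  by (simp add: rat_of_code_def)

lemma rat_of_code_pdf: "rat_of_code n = int_decode (pdf n) / real (Suc (pds n))"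
  by (simp add: rat_of_code_def pdf_def pds_def split: prod.splits)

definition "p_half = Comp p_penc [p_pdf, Comp Succ [Comp p_add [p_pds, p_pds]]]"
lemma rc_half: "rc A (Suc 0) p_half (\<lambda>xs. prod_encode (pdf (xs ! 0), Suc (2 * pds (xs ! 0))))"
  unfolding p_half_def
  by (rule rc_cong[OF rc_c2[OF rc_penc rc_pdf rc_c1[OF rc_Succ rc_c2[OF rc_add rc_pds rc_pds]]]]) auto

definition "p_dbl = Comp p_penc [Comp p_add [Comp p_add [p_pdf, p_pdf], Comp p_mod2 [p_pdf]], p_pds]"
lemma rc_dbl: "rc A (Suc 0) p_dbl (\<lambda>xs. prod_encode (2 * pdf (xs ! 0) + pdf (xs ! 0) mod 2, pds (xs ! 0)))"
  unfolding p_dbl_def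
  by (rule rc_cong[OF rc_c2[OF rc_penc rc_c2[OF rc_add rc_c2[OF rc_add rc_pdf rc_pdf] rc_c1[OF rc_mod2 rc_pdf]] rc_pds]]) auto

lemma int_decode_dbl: "int_decode (2 * i + i mod 2) = 2 * int_decode i"
proof (cases "even i")
  case True
  then obtain a where "i = 2 * a" by blast
  then show ?thesis by (simp add: int_decode_pos_neg ipos_def ineg_def)
next
  case False
  then have "odd (2 * i + i mod 2)" by presburger
  moreover have "(2 * i + i mod 2) div 2 = i" using False by presburger
  moreover have "i mod 2 = 1" using False by presburger
  moreover have "i div 2 * 2 + 1 = i" using False by presburger
  ultimately have "int_decode (2 * i + i mod 2) = - int i - 1" "int_decode i = - int (i div 2) - 1"
    using False by (simp_all add: int_decode_pos_neg ipos_def ineg_def)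
  then show ?thesis using \<open>i div 2 * 2 + 1 = i\<close> by linarith
qed

lemma equiv_double: "turing_equiv_real (2 * x) x"
  unfolding turing_equiv_real_def turing_equiv_set_def
proof
  show "turing_reducible (real_cut (2 * x)) (real_cut x)"
  proof (rule red_by_map[OF rc_half])
    fix n
    have "rat_of_code (prod_encode (pdf n, Suc (2 * pds n))) = rat_of_code n / 2"
      by (simp add: rat_of_code_penc rat_of_code_pdf field_simps)
    then show "real_cut (2 * x) n = real_cut x (prod_encode (pdf n, Suc (2 * pds n)))"
      unfolding real_cut_def by linarith
  qed
  show "turing_reducible (real_cut x) (real_cut (2 * x))"
  proof (rule red_by_map[OF rc_dbl])
    fix n
    have "rat_of_code (prod_encode (2 * pdf n + pdf n mod 2, pds n)) = 2 * rat_of_code n"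
      by (simp add: rat_of_code_penc rat_of_code_pdf int_decode_dbl)
    then show "real_cut x n = real_cut (2 * x) (prod_encode (2 * pdf n + pdf n mod 2, pds n))"
      unfolding real_cut_def by linarith
  qed
qed

definition "p_minus1 = Comp p_penc [Comp p_encdiff [Comp p_ipos [p_pdf], Comp p_add [Comp p_ineg [p_pdf], Comp Succ [p_pds]]], p_pds]"
lemma rc_minus1: "rc A (Suc 0) p_minus1 (\<lambda>xs. prod_encode (encdiff (ipos (pdf (xs ! 0))) (ineg (pdf (xs ! 0)) + Suc (pds (xs ! 0))), pds (xs ! 0)))"
  unfolding p_minus1_def
  by (rule rc_cong[OF rc_c2[OF rc_penc rc_c2[OF rc_encdiff rc_c1[OF rc_ipos rc_pdf] rc_c2[OF rc_add rc_c1[OF rc_ineg rc_pdf] rc_c1[OF rc_Succ rc_pds]]] rc_pds]]) auto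

definition "p_plus1 = Comp p_penc [Comp p_encdiff [Comp p_add [Comp p_ipos [p_pdf], Comp Succ [p_pds]], Comp p_ineg [p_pdf]], p_pds]"
lemma rc_plus1: "rc A (Suc 0) p_plus1 (\<lambda>xs. prod_encode (encdiff (ipos (pdf (xs ! 0)) + Suc (pds (xs ! 0))) (ineg (pdf (xs ! 0))), pds (xs ! 0)))"
  unfolding p_plus1_def
  by (rule rc_cong[OF rc_c2[OF rc_penc rc_c2[OF rc_encdiff rc_c2[OF rc_add rc_c1[OF rc_ipos rc_pdf] rc_c1[OF rc_Succ rc_pds]] rc_c1[OF rc_ineg rc_pdf]] rc_pds]]) auto

lemma equiv_plus1: "turing_equiv_real (x + 1) x"
  unfolding turing_equiv_real_def turing_equiv_set_def
proof
  show "turing_reducible (real_cut (x + 1)) (real_cut x)"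
  proof (rule red_by_map[OF rc_minus1])
    fix n
    have "rat_of_code (prod_encode (encdiff (ipos (pdf n)) (ineg (pdf n) + Suc (pds n)), pds n)) = rat_of_code n - 1"
      by (simp only: rat_of_code_penc int_decode_encdiff pdf_penc pds_penc) (simp add: rat_of_code_pdf int_decode_pos_neg field_simps)
    then show "real_cut (x + 1) n = real_cut x (prod_encode (encdiff (ipos (pdf n)) (ineg (pdf n) + Suc (pds n)), pds n))"
      unfolding real_cut_def by linarith
  qed
  show "turing_reducible (real_cut x) (real_cut (x + 1))"
  proof (rule red_by_map[OF rc_plus1])
    fix n
    have "rat_of_code (prod_encode (encdiff (ipos (pdf n) + Suc (pds n)) (ineg (pdf n)), pds n)) = rat_of_code n + 1"
      by (simp only: rat_of_code_penc int_decode_encdiff pdf_penc pds_penc) (simp add: rat_of_code_pdf int_decode_pos_neg field_simps)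
    then show "real_cut x n = real_cut (x + 1) (prod_encode (encdiff (ipos (pdf n) + Suc (pds n)) (ineg (pdf n)), pds n))"
      unfolding real_cut_def by linarith
  qed
qed


lemma red_refl: "turing_reducible B B"
  by (rule rc_red[OF rc_Oracle])

primrec osub :: "recf \<Rightarrow> recf \<Rightarrow> recf" where
  "osub h Zero = Zero"
| "osub h Succ = Succ"
| "osub h (Proj i) = Proj i"
| "osub h (Comp f gs) = Comp (osub h f) (map (osub h) gs)"
| "osub h (Prec f g) = Prec (osub h f) (osub h g)"
| "osub h (Mn f) = Mn (osub h f)"
| "osub h Oracle = Comp h [Proj 0]"

lemma osub_eval:
  assumes "oracle_eval B f xs y" and h: "\<And>n. oracle_eval A h [n] (if B n then 1 else 0)"
  shows "oracle_eval A (osub h f) xs y"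
  using assms(1)
proof (induction rule: oracle_eval.induct)
  case (ev_zero xs) then show ?case by (simp add: oracle_eval.ev_zero)
next
  case (ev_succ x xs) then show ?case by (simp add: oracle_eval.ev_succ)
next
  case (ev_proj i xs) then show ?case by (simp add: oracle_eval.ev_proj)
next
  case (ev_oracle x xs)
  have "list_all2 (\<lambda>g y. oracle_eval A g (x # xs) y) [Proj 0] [x]"
    using oracle_eval.ev_proj[of 0 "x # xs" A] by simp
  from oracle_eval.ev_comp[OF this h[of x]] show ?case by simp
next
  case (ev_comp xs gs ys f z)
  have "list_all2 (\<lambda>g y. oracle_eval A g xs y) (map (osub h) gs) ys"
    using ev_comp(1) by (simp add: list_all2_map1 list_all2_mono)
  then show ?case unfolding osub.simps by (rule oracle_eval.ev_comp[OF _ ev_comp.IH(2)])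
next
  case (ev_prec0 f xs y g) then show ?case by (simp add: oracle_eval.ev_prec0)
next
  case (ev_precS f g n xs y z) then show ?case by (simp add: oracle_eval.ev_precS)
next
  case (ev_mn f n xs) then show ?case by (auto intro!: oracle_eval.ev_mn)
qed

lemma red_trans: "turing_reducible C B \<Longrightarrow> turing_reducible B A \<Longrightarrow> turing_reducible C A"
  unfolding turing_reducible_def using osub_eval by blast

inductive_cases evZeroE: "oracle_eval A Zero xs y"
inductive_cases evSuccE: "oracle_eval A Succ xs y"
inductive_cases evProjE: "oracle_eval A (Proj i) xs y"
inductive_cases evOracleE: "oracle_eval A Oracle xs y"
inductive_cases evCompE: "oracle_eval A (Comp f gs) xs y"
inductive_cases evPrecE: "oracle_eval A (Prec f g) xs y"
inductive_cases evMnE: "oracle_eval A (Mn f) xs y"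

lemma list_all2_det:
  assumes "list_all2 (\<lambda>g y. oracle_eval A g xs y \<and> (\<forall>y'. oracle_eval A g xs y' \<longrightarrow> y = y')) gs ys"
    and "list_all2 (\<lambda>g y. oracle_eval A g xs y) gs ys'"
  shows "ys = ys'"
  using assms
proof (induction gs ys arbitrary: ys' rule: list_all2_induct)
  case Nil then show ?case by simp
next
  case (Cons g gs y ys)
  then obtain y' ys'' where "ys' = y' # ys''" "oracle_eval A g xs y'" "list_all2 (\<lambda>g y. oracle_eval A g xs y) gs ys''"
    by (cases ys') auto
  then show ?case using Cons by auto
qed

lemma eval_det: "oracle_eval A f xs y \<Longrightarrow> oracle_eval A f xs y' \<Longrightarrow> y = y'"
proof (induction arbitrary: y' rule: oracle_eval.induct)
  case (ev_zero xs) from ev_zero.prems show ?case by (rule evZeroE) simp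
next
  case (ev_succ x xs) from ev_succ.prems show ?case by (rule evSuccE) simp
next
  case (ev_proj i xs) from ev_proj.prems show ?case by (rule evProjE) simp
next
  case (ev_oracle x xs) from ev_oracle.prems show ?case by (rule evOracleE) simp
next
  case (ev_comp xs gs ys f z)
  from ev_comp.prems obtain ys' where l: "list_all2 (\<lambda>g y. oracle_eval A g xs y) gs ys'" and e: "oracle_eval A f ys' y'"
    by (rule evCompE)
  have "ys = ys'" by (rule list_all2_det[OF ev_comp.IH(1) l])
  then show ?case using ev_comp.IH(2) e by simp
next
  case (ev_prec0 f xs y g)
  from ev_prec0.prems have "oracle_eval A f xs y'" by (rule evPrecE) auto
  then show ?case using ev_prec0.IH by simp
next
  case (ev_precS f g n xs y z)
  from ev_precS.prems obtain y2 where a: "oracle_eval A (Prec f g) (n # xs) y2" and b: "oracle_eval A g (n # y2 # xs) y'"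
    by (rule evPrecE) auto
  have "y = y2" using ev_precS.IH(1) a by simp
  then show ?case using ev_precS.IH(2) b by simp
next
  case (ev_mn f n xs)
  from ev_mn.prems have a: "oracle_eval A f (y' # xs) 0" and b: "\<forall>m<y'. \<exists>y. oracle_eval A f (m # xs) (Suc y)"
    by (rule evMnE, simp)+
  show ?case
  proof (rule linorder_cases[of n y'])
    assume "n < y'"
    then obtain y where "oracle_eval A f (n # xs) (Suc y)" using b by blast
    from ev_mn.IH(1)[OF this] show ?thesis by simp
  next
    assume "y' < n"
    then obtain y where "oracle_eval A f (y' # xs) (Suc y)" "\<forall>y2. oracle_eval A f (y' # xs) y2 \<longrightarrow> Suc y = y2"
      using ev_mn.IH(2) by blast
    then have "Suc y = 0" using a by blast
    then show ?thesis by simp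
  qed
qed


instance recf :: countable by countable_datatype

lemma teq_refl: "turing_equiv_real x x"
  by (simp add: turing_equiv_real_def turing_equiv_set_def red_refl)

lemma teq_sym: "turing_equiv_real x y \<Longrightarrow> turing_equiv_real y x"
  by (auto simp: turing_equiv_real_def turing_equiv_set_def)

lemma teq_trans: "turing_equiv_real x y \<Longrightarrow> turing_equiv_real y z \<Longrightarrow> turing_equiv_real x z"
  unfolding turing_equiv_real_def turing_equiv_set_def using red_trans by blast

lemma code_of_rat: "q \<in> \<rat> \<Longrightarrow> \<exists>n. rat_of_code n = q"
proof -
  assume "q \<in> \<rat>"
  then obtain a b where q: "q = real_of_int a / real_of_int b" and b: "b > 0" by (rule Rats_cases') auto
  have "rat_of_code (prod_encode (int_encode a, nat b - 1)) = q"
    using b by (simp add: rat_of_code_def q)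
  then show ?thesis by blast
qed

lemma rat_of_code_Rats: "rat_of_code n \<in> \<rat>"
  by (simp add: rat_of_code_def split: prod.splits)

lemma code_between: "x < y \<Longrightarrow> \<exists>n. x < rat_of_code n \<and> rat_of_code n < y"
  using Rats_dense_in_real code_of_rat by metis

lemma real_cut_inj: assumes "real_cut x = real_cut y" shows "x = y"
proof (rule ccontr)
  assume "x \<noteq> y"
  then consider "x < y" | "y < x" by linarith
  then show False
  proof cases
    case 1 then obtain n where "x < rat_of_code n" "rat_of_code n < y" using code_between by blast
    moreover have "real_cut x n = real_cut y n" using assms by simp
    ultimately show False unfolding real_cut_def by simp
  next
    case 2 then obtain n where "y < rat_of_code n" "rat_of_code n < x" using code_between by blast
    moreover have "real_cut x n = real_cut y n" using assms by simp
    ultimately show False unfolding real_cut_def by simp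
  qed
qed

lemma countable_class: "countable {y. turing_equiv_real y x}"
proof -
  define F where "F f = (THE y. \<forall>n. oracle_eval (real_cut x) f [n] (if real_cut y n then 1 else 0))" for f
  have "{y. turing_equiv_real y x} \<subseteq> range F"
  proof
    fix y assume "y \<in> {y. turing_equiv_real y x}"
    then obtain f where f: "\<forall>n. oracle_eval (real_cut x) f [n] (if real_cut y n then 1 else 0)"
      by (auto simp: turing_equiv_real_def turing_equiv_set_def turing_reducible_def)
    have "F f = y" unfolding F_def
    proof (rule the_equality)
      show "\<forall>n. oracle_eval (real_cut x) f [n] (if real_cut y n then 1 else 0)" by (rule f)
    next
      fix y' assume f': "\<forall>n. oracle_eval (real_cut x) f [n] (if real_cut y' n then 1 else 0)"
      have "real_cut y' = real_cut y"
      proof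
        fix n
        have "(if real_cut y' n then 1 else 0) = (if real_cut y n then 1 else (0::nat))"
          using eval_det f f' by blast
        then show "real_cut y' n = real_cut y n" by (auto split: if_splits)
      qed
      then show "y' = y" by (rule real_cut_inj)
    qed
    then show "y \<in> range F" by (metis rangeI)
  qed
  then show ?thesis by (rule countable_subset) simp
qed


definition w :: "(nat \<Rightarrow> bool) \<Rightarrow> nat \<Rightarrow> real" where
  "w c m = (if c m then 1 else 0) / 2 ^ Suc m"

lemma w_nonneg: "0 \<le> w c m" by (simp add: w_def)
lemma w_le: "w c m \<le> (1/2) ^ Suc m" by (simp add: w_def power_one_over)

lemma summable_geo2: "summable (\<lambda>m. (1/2::real) ^ Suc m)"
  by (simp add: summable_geometric)

lemma suminf_geo2: "(\<Sum>m. (1/2::real) ^ Suc m) = 1"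
proof -
  have "(\<lambda>m. (1/2::real) ^ Suc m) = (\<lambda>m. (1/2) * (1/2) ^ m)" by simp
  moreover have "(\<Sum>m. (1/2::real) * (1/2) ^ m) = (1/2) * (\<Sum>m. (1/2) ^ m)"
    by (rule suminf_mult) (simp add: summable_geometric)
  ultimately show ?thesis by (simp add: suminf_geometric)
qed

lemma summable_w: "summable (w c)"
proof (rule summable_comparison_test'[OF summable_geo2])
  fix n :: nat
  show "norm (w c n) \<le> (1/2) ^ Suc n" using w_nonneg[of c n] w_le[of c n] by (simp only: real_norm_def abs_of_nonneg)
qed

lemma summable_w_shift: "summable (\<lambda>m. w c (m + N))"
  using summable_w by (simp add: summable_iff_shift)

lemma w_split: "(\<Sum>m. w c m) = (\<Sum>m<N. w c m) + (\<Sum>m. w c (m + N))"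
  using suminf_split_initial_segment[OF summable_w, of c N] by simp

lemma tail_nonneg: "0 \<le> (\<Sum>m. w c (m + N))"
  by (rule suminf_nonneg[OF summable_w_shift]) (simp add: w_nonneg)

lemma tail_le: "(\<Sum>m. w c (m + N)) \<le> 1 / 2 ^ N"
proof -
  have "(\<Sum>m. w c (m + N)) \<le> (\<Sum>m. (1/2) ^ N * (1/2::real) ^ Suc m)"
  proof (rule suminf_le)
    show "summable (\<lambda>m. (1/2) ^ N * (1/2::real) ^ Suc m)"
      by (rule summable_mult[OF summable_geo2])
    show "summable (\<lambda>m. w c (m + N))" by (rule summable_w_shift)
    fix m
    have "w c (m + N) \<le> (1/2) ^ Suc (m + N)" by (rule w_le)
    also have "\<dots> = (1/2) ^ N * (1/2::real) ^ Suc m" by (simp add: power_add)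
    finally show "w c (m + N) \<le> (1/2) ^ N * (1/2::real) ^ Suc m" .
  qed
  also have "\<dots> = (1/2) ^ N * (\<Sum>m. (1/2::real) ^ Suc m)"
    by (rule suminf_mult[OF summable_geo2])
  also have "\<dots> = 1 / 2 ^ N" by (simp only: suminf_geo2) (simp add: power_one_over)
  finally show ?thesis .
qed

lemma w_mono_sum: "(\<And>m. c m \<Longrightarrow> d m) \<Longrightarrow> (\<Sum>m. w c m) \<le> (\<Sum>m. w d m)"
  by (rule suminf_le[OF _ summable_w summable_w]) (auto simp: w_def)

definition phi :: "real \<Rightarrow> real" where "phi x = (\<Sum>m. w (real_cut x) m)"

primrec Sx :: "(nat \<Rightarrow> bool) \<Rightarrow> nat \<Rightarrow> nat" where
  "Sx c 0 = 0"
| "Sx c (Suc N) = 2 * Sx c N + (if c N then 1 else 0)"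

lemma Sx_real: "real (Sx c N) = 2 ^ N * (\<Sum>m<N. w c m)"
  by (induction N) (simp_all add: w_def algebra_simps)

lemma Sx_bounds: "real (Sx c N) / 2 ^ N \<le> (\<Sum>m. w c m)" "(\<Sum>m. w c m) \<le> (real (Sx c N) + 1) / 2 ^ N"
proof -
  have e: "real (Sx c N) / 2 ^ N = (\<Sum>m<N. w c m)" by (simp add: Sx_real)
  show "real (Sx c N) / 2 ^ N \<le> (\<Sum>m. w c m)" using e w_split[of c N] tail_nonneg[of c N] by linarith
  have "(real (Sx c N) + 1) / 2 ^ N = (\<Sum>m<N. w c m) + 1 / 2 ^ N" using e by (simp add: add_divide_distrib)
  then show "(\<Sum>m. w c m) \<le> (real (Sx c N) + 1) / 2 ^ N" using w_split[of c N] tail_le[of c N] by linarith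
qed


definition rl :: "nat \<Rightarrow> nat \<Rightarrow> bool" where
  "rl m n \<longleftrightarrow> ipos (pdf m) * Suc (pds n) + ineg (pdf n) * Suc (pds m) < ipos (pdf n) * Suc (pds m) + ineg (pdf m) * Suc (pds n)"

lemma rl_iff: "rl m n \<longleftrightarrow> rat_of_code m < rat_of_code n"
proof -
  define p1 where "p1 = real (ipos (pdf m))"
  define n1 where "n1 = real (ineg (pdf m))"
  define b1 where "b1 = real (Suc (pds m))"
  define p2 where "p2 = real (ipos (pdf n))"
  define n2 where "n2 = real (ineg (pdf n))"
  define b2 where "b2 = real (Suc (pds n))"
  have b: "b1 > 0" "b2 > 0" by (simp_all add: b1_def b2_def)
  have "rat_of_code m < rat_of_code n \<longleftrightarrow> (p1 - n1) / b1 < (p2 - n2) / b2"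
    by (simp add: rat_of_code_alt p1_def n1_def b1_def p2_def n2_def b2_def)
  also have "\<dots> \<longleftrightarrow> (p1 - n1) * b2 < (p2 - n2) * b1" using b by (simp add: divide_less_eq less_divide_eq field_simps)
  also have "\<dots> \<longleftrightarrow> p1 * b2 + n2 * b1 < p2 * b1 + n1 * b2" by (simp add: algebra_simps)
  also have "\<dots> \<longleftrightarrow> rl m n"
    unfolding rl_def p1_def n1_def b1_def p2_def n2_def b2_def
    by (simp only: of_nat_mult[symmetric] of_nat_add[symmetric] of_nat_less_iff)
  finally show ?thesis by simp
qed

definition "p_rl = Comp p_less [Comp p_add [Comp p_mul [Comp p_ipos [Comp p_pdf [Proj 0]], Comp Succ [Comp p_pds [Proj 1]]], Comp p_mul [Comp p_ineg [Comp p_pdf [Proj 1]], Comp Succ [Comp p_pds [Proj 0]]]], Comp p_add [Comp p_mul [Comp p_ipos [Comp p_pdf [Proj 1]], Comp Succ [Comp p_pds [Proj 0]]], Comp p_mul [Comp p_ineg [Comp p_pdf [Proj 0]], Comp Succ [Comp p_pds [Proj 1]]]]]"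

lemma rc_rl: "rc A (Suc (Suc 0)) p_rl (\<lambda>xs. if rl (xs ! 0) (xs ! 1) then 1 else 0)"
proof -
  have i0: "rc A (Suc (Suc 0)) (Comp p_ipos [Comp p_pdf [Proj 0]]) (\<lambda>xs. ipos (pdf (xs ! 0)))"
    by (rule rc_cong[OF rc_c1[OF rc_ipos rc_c1[OF rc_pdf rc_Proj[of 0]]]]) auto
  have i1: "rc A (Suc (Suc 0)) (Comp p_ipos [Comp p_pdf [Proj 1]]) (\<lambda>xs. ipos (pdf (xs ! 1)))"
    by (rule rc_cong[OF rc_c1[OF rc_ipos rc_c1[OF rc_pdf rc_Proj[of 1]]]]) auto
  have n0: "rc A (Suc (Suc 0)) (Comp p_ineg [Comp p_pdf [Proj 0]]) (\<lambda>xs. ineg (pdf (xs ! 0)))"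
    by (rule rc_cong[OF rc_c1[OF rc_ineg rc_c1[OF rc_pdf rc_Proj[of 0]]]]) auto
  have n1: "rc A (Suc (Suc 0)) (Comp p_ineg [Comp p_pdf [Proj 1]]) (\<lambda>xs. ineg (pdf (xs ! 1)))"
    by (rule rc_cong[OF rc_c1[OF rc_ineg rc_c1[OF rc_pdf rc_Proj[of 1]]]]) auto
  have b0: "rc A (Suc (Suc 0)) (Comp Succ [Comp p_pds [Proj 0]]) (\<lambda>xs. Suc (pds (xs ! 0)))"
    by (rule rc_cong[OF rc_c1[OF rc_Succ rc_c1[OF rc_pds rc_Proj[of 0]]]]) auto
  have b1: "rc A (Suc (Suc 0)) (Comp Succ [Comp p_pds [Proj 1]]) (\<lambda>xs. Suc (pds (xs ! 1)))"
    by (rule rc_cong[OF rc_c1[OF rc_Succ rc_c1[OF rc_pds rc_Proj[of 1]]]]) auto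
  show ?thesis unfolding p_rl_def
    by (rule rc_cong[OF rc_c2[OF rc_less rc_c2[OF rc_add rc_c2[OF rc_mul i0 b1] rc_c2[OF rc_mul n1 b0]]
      rc_c2[OF rc_add rc_c2[OF rc_mul i1 b0] rc_c2[OF rc_mul n0 b1]]]]) (auto simp: rl_def)
qed

primrec Tf :: "nat \<Rightarrow> nat \<Rightarrow> nat" where
  "Tf n 0 = 0"
| "Tf n (Suc j) = 2 * Tf n j + (if rl j n then 2 else 0)"

definition "p_T = Prec Zero (Comp p_add [Comp p_add [Proj 1, Proj 1], Comp p_add [Comp p_rl [Proj 0, Proj 2], Comp p_rl [Proj 0, Proj 2]]])"

lemma rc_T: "rc A (Suc (Suc 0)) p_T (\<lambda>xs. Tf (xs ! 1) (xs ! 0))"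
proof -
  have r: "rc A (Suc (Suc (Suc 0))) (Comp p_rl [Proj 0, Proj 2]) (\<lambda>xs. if rl (xs ! 0) (xs ! 2) then 1 else 0)"
    by (rule rc_cong[OF rc_c2[OF rc_rl rc_Proj[of 0] rc_Proj[of 2]]]) auto
  have g: "rc A (Suc (Suc (Suc 0))) (Comp p_add [Comp p_add [Proj 1, Proj 1], Comp p_add [Comp p_rl [Proj 0, Proj 2], Comp p_rl [Proj 0, Proj 2]]])
     (\<lambda>xs. 2 * xs ! 1 + (if rl (xs ! 0) (xs ! 2) then 2 else 0))"
    by (rule rc_cong[OF rc_c2[OF rc_add rc_c2[OF rc_add rc_Proj[of 1] rc_Proj[of 1]] rc_c2[OF rc_add r r]]]) auto
  show ?thesis unfolding p_T_def
    by (rule rc_Prec'[OF rc_Zero g]) auto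
qed

definition gA :: "nat \<Rightarrow> nat" where "gA n = prod_encode (2 * Suc (Tf n n), 2 ^ Suc n - 1)"

definition "p_gA = Comp p_penc [Comp p_add [Comp Succ [Comp p_T [Proj 0, Proj 0]], Comp Succ [Comp p_T [Proj 0, Proj 0]]], Comp p_pred [Comp p_pow2 [Comp Succ [Proj 0]]]]"

lemma rc_gA: "rc A (Suc 0) p_gA (\<lambda>xs. gA (xs ! 0))"
proof -
  have t: "rc A (Suc 0) (Comp Succ [Comp p_T [Proj 0, Proj 0]]) (\<lambda>xs. Suc (Tf (xs ! 0) (xs ! 0)))"
    by (rule rc_cong[OF rc_c1[OF rc_Succ rc_c2[OF rc_T rc_Proj[of 0] rc_Proj[of 0]]]]) auto
  show ?thesis unfolding p_gA_def
    by (rule rc_cong[OF rc_c2[OF rc_penc rc_c2[OF rc_add t t] rc_c1[OF rc_pred rc_c1[OF rc_pow2 rc_c1[OF rc_Succ rc_Proj[of 0]]]]]])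
      (auto simp: gA_def)
qed

lemma Tf_real: "real (Tf n j) = 2 ^ Suc j * (\<Sum>m<j. w (\<lambda>m. rat_of_code m < rat_of_code n) m)"
  by (induction j) (simp_all add: w_def rl_iff algebra_simps)

lemma int_decode_even: "int_decode (2 * k) = int k"
  by (simp add: int_decode_pos_neg ipos_def ineg_def)

lemma rat_gA: "rat_of_code (gA n) = (\<Sum>m<n. w (\<lambda>m. rat_of_code m < rat_of_code n) m) + 1 / 2 ^ Suc n"
proof -
  have d: "real (Suc (2 ^ Suc n - 1)) = 2 ^ Suc n"
  proof -
    have "Suc (2 ^ Suc n - 1) = (2::nat) ^ Suc n" by simp
    then show ?thesis by (metis of_nat_numeral of_nat_power)
  qed
  have "rat_of_code (gA n) = real (Suc (Tf n n)) / 2 ^ Suc n"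
    unfolding gA_def rat_of_code_penc int_decode_even d by simp
  also have "\<dots> = (\<Sum>m<n. w (\<lambda>m. rat_of_code m < rat_of_code n) m) + 1 / 2 ^ Suc n"
    by (simp add: Tf_real add_divide_distrib)
  finally show ?thesis .
qed

lemma keyA:
  assumes x: "x \<notin> \<rat>" and px: "phi x \<notin> \<rat>"
  shows "rat_of_code n < x \<longleftrightarrow> rat_of_code (gA n) < phi x"
proof -
  define d where "d = (\<lambda>m. rat_of_code m < rat_of_code n)"
  define c where "c = real_cut x"
  have s: "rat_of_code (gA n) = (\<Sum>m<n. w d m) + 1 / 2 ^ Suc n" using rat_gA d_def by simp
  have ph: "phi x = (\<Sum>m<n. w c m) + w c n + (\<Sum>m. w c (m + Suc n))"
    unfolding phi_def c_def using w_split[of "real_cut x" "Suc n"] by simp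
  show ?thesis
  proof
    assume lt: "rat_of_code n < x"
    have "(\<Sum>m<n. w d m) \<le> (\<Sum>m<n. w c m)"
      by (rule sum_mono) (use lt in \<open>auto simp: w_def d_def c_def real_cut_def\<close>)
    moreover have "w c n = 1 / 2 ^ Suc n" using lt by (simp add: w_def c_def real_cut_def)
    ultimately have "rat_of_code (gA n) \<le> phi x" using s ph tail_nonneg[of c "Suc n"] by linarith
    moreover have "rat_of_code (gA n) \<noteq> phi x" using px rat_of_code_Rats by metis
    ultimately show "rat_of_code (gA n) < phi x" by simp
  next
    assume lt: "rat_of_code (gA n) < phi x"
    show "rat_of_code n < x"
    proof (rule ccontr)
      assume "\<not> rat_of_code n < x"
      moreover have "rat_of_code n \<noteq> x" using x rat_of_code_Rats by metis
      ultimately have gt: "x < rat_of_code n" by simp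
      have "(\<Sum>m<n. w c m) \<le> (\<Sum>m<n. w d m)"
        by (rule sum_mono) (use gt in \<open>auto simp: w_def d_def c_def real_cut_def\<close>)
      moreover have "w c n = 0" using gt by (simp add: w_def c_def real_cut_def)
      ultimately have "phi x \<le> rat_of_code (gA n)" using s ph tail_le[of c "Suc n"] by simp
      then show False using lt by simp
    qed
  qed
qed

lemma redA: "x \<notin> \<rat> \<Longrightarrow> phi x \<notin> \<rat> \<Longrightarrow> turing_reducible (real_cut x) (real_cut (phi x))"
  by (rule red_by_map[OF rc_gA]) (simp add: real_cut_def keyA)


definition "p_S = Prec Zero (Comp p_add [Comp p_add [Proj 1, Proj 1], Comp Oracle [Proj 0]])"

lemma rc_S: "rc A (Suc 0) p_S (\<lambda>xs. Sx A (xs ! 0))"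
proof -
  have g: "rc A (Suc (Suc 0)) (Comp p_add [Comp p_add [Proj 1, Proj 1], Comp Oracle [Proj 0]])
     (\<lambda>xs. 2 * xs ! 1 + (if A (xs ! 0) then 1 else 0))"
    by (rule rc_cong[OF rc_c2[OF rc_add rc_c2[OF rc_add rc_Proj[of 1] rc_Proj[of 1]] rc_c1[OF rc_Oracle rc_Proj[of 0]]]]) auto
  show ?thesis unfolding p_S_def by (rule rc_Prec'[OF rc_Zero g]) auto
qed

definition cnd :: "(nat \<Rightarrow> bool) \<Rightarrow> nat \<Rightarrow> nat \<Rightarrow> bool" where
  "cnd A n N \<longleftrightarrow> ipos (pdf n) * 2 ^ N < Sx A N * Suc (pds n) \<or> Suc (Sx A N) * Suc (pds n) < ipos (pdf n) * 2 ^ N"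

definition "p_cnd = Comp p_isz [Comp p_add [
   Comp p_less [Comp p_mul [Comp p_ipos [Comp p_pdf [Proj 1]], Comp p_pow2 [Proj 0]], Comp p_mul [Comp p_S [Proj 0], Comp Succ [Comp p_pds [Proj 1]]]],
   Comp p_less [Comp p_mul [Comp Succ [Comp p_S [Proj 0]], Comp Succ [Comp p_pds [Proj 1]]], Comp p_mul [Comp p_ipos [Comp p_pdf [Proj 1]], Comp p_pow2 [Proj 0]]]]]"

lemma rc_cnd: "rc A (Suc (Suc 0)) p_cnd (\<lambda>xs. if cnd A (xs ! 1) (xs ! 0) then 0 else 1)"
proof -
  have a: "rc A (Suc (Suc 0)) (Comp p_mul [Comp p_ipos [Comp p_pdf [Proj 1]], Comp p_pow2 [Proj 0]]) (\<lambda>xs. ipos (pdf (xs ! 1)) * 2 ^ (xs ! 0))"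
    by (rule rc_cong[OF rc_c2[OF rc_mul rc_c1[OF rc_ipos rc_c1[OF rc_pdf rc_Proj[of 1]]] rc_c1[OF rc_pow2 rc_Proj[of 0]]]]) auto
  have b: "rc A (Suc (Suc 0)) (Comp Succ [Comp p_pds [Proj 1]]) (\<lambda>xs. Suc (pds (xs ! 1)))"
    by (rule rc_cong[OF rc_c1[OF rc_Succ rc_c1[OF rc_pds rc_Proj[of 1]]]]) auto
  have s: "rc A (Suc (Suc 0)) (Comp p_S [Proj 0]) (\<lambda>xs. Sx A (xs ! 0))"
    by (rule rc_cong[OF rc_c1[OF rc_S rc_Proj[of 0]]]) auto
  show ?thesis unfolding p_cnd_def
    by (rule rc_cong[OF rc_c1[OF rc_isz rc_c2[OF rc_add rc_c2[OF rc_less a rc_c2[OF rc_mul s b]]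
        rc_c2[OF rc_less rc_c2[OF rc_mul rc_c1[OF rc_Succ s] b] a]]]]) (auto simp: cnd_def)
qed

definition Nst :: "(nat \<Rightarrow> bool) \<Rightarrow> nat \<Rightarrow> nat" where "Nst A n = (LEAST N. cnd A n N)"

definition ansB :: "(nat \<Rightarrow> bool) \<Rightarrow> nat \<Rightarrow> nat" where
  "ansB A n = (if pdf n mod 2 \<noteq> 0 then 1 else if ipos (pdf n) * 2 ^ Nst A n < Sx A (Nst A n) * Suc (pds n) then 1 else 0)"

definition "p_ansB = Comp p_if [Comp p_mod2 [p_pdf], p_num 1,
  Comp p_less [Comp p_mul [Comp p_ipos [p_pdf], Comp p_pow2 [Mn p_cnd]], Comp p_mul [Comp p_S [Mn p_cnd], Comp Succ [p_pds]]]]"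

lemma rc_ansB:
  assumes ex: "\<And>n. \<exists>N. cnd A n N"
  shows "rc A (Suc 0) p_ansB (\<lambda>xs. ansB A (xs ! 0))"
proof -
  have m0: "rc A (Suc 0) (Mn p_cnd) (\<lambda>xs. LEAST N. (if cnd A ((N # xs) ! 1) ((N # xs) ! 0) then 0 else 1) = (0::nat))"
  proof (rule rc_Mn[OF rc_cnd])
    fix xs :: "nat list" assume "length xs = Suc 0"
    obtain N where "cnd A (xs ! 0) N" using ex by blast
    then show "\<exists>N. (if cnd A ((N # xs) ! 1) ((N # xs) ! 0) then 0 else 1) = (0::nat)" by auto
  qed
  have m: "rc A (Suc 0) (Mn p_cnd) (\<lambda>xs. Nst A (xs ! 0))"
    by (rule rc_cong[OF m0]) (auto simp: Nst_def)
  show ?thesis unfolding p_ansB_def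
    by (rule rc_cong[OF rc_c3[OF rc_if rc_c1[OF rc_mod2 rc_pdf] rc_num
       rc_c2[OF rc_less rc_c2[OF rc_mul rc_c1[OF rc_ipos rc_pdf] rc_c1[OF rc_pow2 m]]
         rc_c2[OF rc_mul rc_c1[OF rc_S m] rc_c1[OF rc_Succ rc_pds]]]]]) (auto simp: ansB_def)
qed

lemma phi_nonneg: "0 \<le> phi x"
  unfolding phi_def by (rule suminf_nonneg[OF summable_w]) (simp add: w_nonneg)

lemma cnd_real:
  fixes a b S N :: nat assumes "b > 0"
  shows "a * 2 ^ N < S * b \<longleftrightarrow> real a / real b < real S / 2 ^ N"
    and "Suc S * b < a * 2 ^ N \<longleftrightarrow> (real S + 1) / 2 ^ N < real a / real b"
proof -
  have "a * 2 ^ N < S * b \<longleftrightarrow> real (a * 2 ^ N) < real (S * b)" by (simp only: of_nat_less_iff)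
  also have "\<dots> \<longleftrightarrow> real a * 2 ^ N < real S * real b" by simp
  also have "\<dots> \<longleftrightarrow> real a / real b < real S / 2 ^ N" using assms by (simp add: field_simps)
  finally show "a * 2 ^ N < S * b \<longleftrightarrow> real a / real b < real S / 2 ^ N" .
  have "Suc S * b < a * 2 ^ N \<longleftrightarrow> real (Suc S * b) < real (a * 2 ^ N)" by (simp only: of_nat_less_iff)
  also have "\<dots> \<longleftrightarrow> (real S + 1) * real b < real a * 2 ^ N" by (simp add: algebra_simps)
  also have "\<dots> \<longleftrightarrow> (real S + 1) / 2 ^ N < real a / real b" using assms by (simp add: field_simps)
  finally show "Suc S * b < a * 2 ^ N \<longleftrightarrow> (real S + 1) / 2 ^ N < real a / real b" .
qed

lemma keyB_ex:
  assumes px: "phi x \<notin> \<rat>"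
  shows "\<exists>N. cnd (real_cut x) n N"
proof -
  define a where "a = ipos (pdf n)"
  define b where "b = Suc (pds n)"
  define r where "r = real a / real b"
  have b0: "b > 0" by (simp add: b_def)
  have "r \<in> \<rat>" by (simp add: r_def)
  then have ne: "r \<noteq> phi x" using px by metis
  let ?c = "real_cut x"
  have bnd: "\<And>N. real (Sx ?c N) / 2 ^ N \<le> phi x" "\<And>N. phi x \<le> (real (Sx ?c N) + 1) / 2 ^ N"
    unfolding phi_def by (rule Sx_bounds)+
  consider "r < phi x" | "phi x < r" using ne by linarith
  then show ?thesis
  proof cases
    case 1
    obtain N where N: "(1/2::real) ^ N < phi x - r" using real_arch_pow_inv[of "phi x - r" "1/2"] 1 by auto
    have "r < real (Sx ?c N) / 2 ^ N"
    proof -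
      have "(real (Sx ?c N) + 1) / 2 ^ N = real (Sx ?c N) / 2 ^ N + (1/2) ^ N" by (simp add: add_divide_distrib power_one_over)
      then show ?thesis using bnd(2)[of N] N by linarith
    qed
    then show ?thesis unfolding cnd_def using cnd_real(1)[OF b0] by (auto simp: r_def a_def b_def)
  next
    case 2
    obtain N where N: "(1/2::real) ^ N < r - phi x" using real_arch_pow_inv[of "r - phi x" "1/2"] 2 by auto
    have "(real (Sx ?c N) + 1) / 2 ^ N < r"
    proof -
      have "(real (Sx ?c N) + 1) / 2 ^ N = real (Sx ?c N) / 2 ^ N + (1/2) ^ N" by (simp add: add_divide_distrib power_one_over)
      then show ?thesis using bnd(1)[of N] N by linarith
    qed
    then show ?thesis unfolding cnd_def using cnd_real(2)[OF b0] by (auto simp: r_def a_def b_def)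
  qed
qed

lemma keyB:
  assumes px: "phi x \<notin> \<rat>"
  shows "ansB (real_cut x) n = (if real_cut (phi x) n then 1 else 0)"
proof -
  let ?c = "real_cut x"
  define N where "N = Nst ?c n"
  have cN: "cnd ?c n N" unfolding N_def Nst_def using keyB_ex[OF px] by (metis LeastI)
  have bnd: "real (Sx ?c N) / 2 ^ N \<le> phi x" "phi x \<le> (real (Sx ?c N) + 1) / 2 ^ N"
    unfolding phi_def by (rule Sx_bounds)+
  have b0: "Suc (pds n) > 0" by simp
  show ?thesis
  proof (cases "pdf n mod 2 = 0")
    case False
    then have "odd (pdf n)" by presburger
    then have "rat_of_code n < 0" by (simp add: rat_of_code_alt ipos_def ineg_def divide_neg_pos)
    then have "real_cut (phi x) n" using phi_nonneg[of x] by (simp add: real_cut_def)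
    then show ?thesis using False by (simp add: ansB_def)
  next
    case True
    then have ev: "even (pdf n)" by presburger
    have r: "rat_of_code n = real (ipos (pdf n)) / real (Suc (pds n))"
      using ev by (simp add: rat_of_code_alt ineg_def)
    show ?thesis
    proof (cases "ipos (pdf n) * 2 ^ N < Sx ?c N * Suc (pds n)")
      case True
      then have "rat_of_code n < phi x" using cnd_real(1)[OF b0] r bnd(1) by simp
      then show ?thesis using True \<open>pdf n mod 2 = 0\<close> by (simp add: ansB_def real_cut_def N_def)
    next
      case F: False
      then have "Suc (Sx ?c N) * Suc (pds n) < ipos (pdf n) * 2 ^ N" using cN by (simp add: cnd_def)
      then have "phi x < rat_of_code n" using cnd_real(2)[OF b0] r bnd(2) by simp
      then show ?thesis using F \<open>pdf n mod 2 = 0\<close> by (simp add: ansB_def real_cut_def N_def)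
    qed
  qed
qed

lemma redB: "phi x \<notin> \<rat> \<Longrightarrow> turing_reducible (real_cut (phi x)) (real_cut x)"
  by (rule rc_red[OF rc_cong[OF rc_ansB[OF keyB_ex]]]) (simp_all add: keyB)

lemma teq_phi: "x \<notin> \<rat> \<Longrightarrow> phi x \<notin> \<rat> \<Longrightarrow> turing_equiv_real x (phi x)"
  by (simp add: turing_equiv_real_def turing_equiv_set_def redA redB)


lemma w_diff_nonneg: "(\<And>m. c m \<Longrightarrow> d m) \<Longrightarrow> 0 \<le> w d m - w c m"
  by (auto simp: w_def)

lemma phi_strict_mono: assumes "x < y" shows "phi x < phi y"
proof -
  obtain n where n: "x < rat_of_code n" "rat_of_code n < y" using code_between[OF assms] by blast
  have cd: "real_cut x m \<Longrightarrow> real_cut y m" for m using assms by (auto simp: real_cut_def)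
  have "0 < (\<Sum>m. w (real_cut y) m - w (real_cut x) m)"
  proof (rule suminf_pos2)
    show "summable (\<lambda>m. w (real_cut y) m - w (real_cut x) m)" by (intro summable_diff summable_w)
    show "0 \<le> w (real_cut y) m - w (real_cut x) m" for m by (rule w_diff_nonneg[OF cd])
    show "0 < w (real_cut y) n - w (real_cut x) n" using n by (simp add: w_def real_cut_def)
  qed
  also have "\<dots> = phi y - phi x" unfolding phi_def by (simp add: suminf_diff[OF summable_w summable_w])
  finally show ?thesis by simp
qed

lemma phi_inj: "inj phi"
proof (rule injI)
  fix x y assume "phi x = phi y"
  then show "x = y" using phi_strict_mono[of x y] phi_strict_mono[of y x] by (cases x y rule: linorder_cases) auto
qed

lemma phi_le1: "phi x \<le> 1"
proof -
  have "phi x \<le> (real (Sx (real_cut x) 0) + 1) / 2 ^ 0" unfolding phi_def by (rule Sx_bounds)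
  then show ?thesis by simp
qed

lemma countable_phi_rat: "countable {x. phi x \<in> \<rat>}"
proof (rule countable_image_inj_on)
  show "countable (phi ` {x. phi x \<in> \<rat>})" by (rule countable_subset[OF _ countable_rat]) auto
  show "inj_on phi {x. phi x \<in> \<rat>}" using phi_inj by (simp add: inj_on_def inj_def)
qed

definition pref :: "real \<Rightarrow> nat \<Rightarrow> nat set" where "pref x M = {m. m < M \<and> real_cut x m}"

lemma pref_chain: "x \<le> y \<Longrightarrow> pref x M \<subseteq> pref y M"
  by (auto simp: pref_def real_cut_def)

lemma card_prefs: "finite (range (\<lambda>x. pref x M)) \<and> card (range (\<lambda>x. pref x M)) \<le> Suc M"
proof -
  let ?P = "range (\<lambda>x. pref x M)"
  have sub: "?P \<subseteq> Pow {..<M}" by (auto simp: pref_def)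
  then have fin: "finite ?P" by (rule finite_subset) simp
  have "inj_on card ?P"
  proof (rule inj_onI)
    fix A B assume A: "A \<in> ?P" and B: "B \<in> ?P" and c: "card A = card B"
    obtain x y where "A = pref x M" "B = pref y M" using A B by blast
    moreover have "finite (pref x M)" "finite (pref y M)" by (auto simp: pref_def)
    ultimately show "A = B"
    proof (cases "x \<le> y")
      case True
      then have "pref x M \<subseteq> pref y M" by (rule pref_chain)
      then show ?thesis using card_subset_eq[of "pref y M" "pref x M"] c \<open>finite (pref y M)\<close> \<open>A = pref x M\<close> \<open>B = pref y M\<close> by simp
    next
      case False
      then have "pref y M \<subseteq> pref x M" by (intro pref_chain) simp
      then show ?thesis using card_subset_eq[of "pref x M" "pref y M"] c \<open>finite (pref x M)\<close> \<open>A = pref x M\<close> \<open>B = pref y M\<close> by simp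
    qed
  qed
  moreover have "card ` ?P \<subseteq> {..M}"
  proof
    fix k assume "k \<in> card ` ?P"
    then obtain x where "k = card (pref x M)" by blast
    moreover have "pref x M \<subseteq> {..<M}" by (auto simp: pref_def)
    ultimately show "k \<in> {..M}" using card_mono[of "{..<M}" "pref x M"] by simp
  qed
  ultimately have "card ?P \<le> card {..M}" by (intro card_inj_on_le) auto
  then show ?thesis using fin by simp
qed

definition vq :: "nat \<Rightarrow> nat set \<Rightarrow> real" where "vq M Q = (\<Sum>m<M. w (\<lambda>m. m \<in> Q) m)"

lemma phi_in_box: "phi x \<in> {vq M (pref x M) .. vq M (pref x M) + 1 / 2 ^ M}"
proof -
  have e: "vq M (pref x M) = (\<Sum>m<M. w (real_cut x) m)"
    unfolding vq_def by (rule sum.cong) (auto simp: w_def pref_def)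
  show ?thesis using w_split[of "real_cut x" M] tail_nonneg[of "real_cut x" M] tail_le[of "real_cut x" M]
    unfolding phi_def e by simp
qed

lemma sq_le_pow: "(n + 1) ^ 2 \<le> 4 * (2::nat) ^ n"
proof (induction n)
  case 0 then show ?case by simp
next
  case (Suc n)
  have "n < 2 ^ n" by (rule less_exp)
  then have "2 * n + 3 \<le> 4 * 2 ^ n" by linarith
  then show ?case using Suc by (simp add: power2_eq_square algebra_simps)
qed

lemma range_phi_null: "range phi \<in> null_sets lebesgue"
  unfolding negligible_iff_null_sets[symmetric] negligible_outer_le
proof (intro allI impI)
  fix e :: real assume e: "e > 0"
  obtain M :: nat where M: "4 / e \<le> real M" using real_arch_simple by blast
  let ?P = "range (\<lambda>x. pref x M)"
  define Tm where "Tm = (\<Union>Q\<in>?P. {vq M Q .. vq M Q + 1 / 2 ^ M})"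
  have fin: "finite ?P" and cP: "card ?P \<le> Suc M" using card_prefs by auto
  have "range phi \<subseteq> Tm" unfolding Tm_def using phi_in_box by blast
  moreover have "Tm \<in> lmeasurable" unfolding Tm_def using fin by (intro fmeasurable.finite_UN) auto
  moreover have "measure lebesgue Tm \<le> e"
  proof -
    have "measure lebesgue Tm \<le> (\<Sum>Q\<in>?P. measure lebesgue {vq M Q .. vq M Q + 1 / 2 ^ M})"
      unfolding Tm_def using fin by (intro measure_UNION_le) auto
    also have "\<dots> = (\<Sum>Q\<in>?P. 1 / 2 ^ M)" by (intro sum.cong) (auto simp: measure_def)
    also have "\<dots> = real (card ?P) / 2 ^ M" by simp
    also have "\<dots> \<le> real (Suc M) / 2 ^ M" using cP by (simp add: divide_right_mono)
    also have "\<dots> \<le> e"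
    proof -
      have "real ((M + 1) ^ 2) \<le> real (4 * 2 ^ M)" using sq_le_pow[of M] by (simp only: of_nat_le_iff)
      moreover have "real ((M + 1) ^ 2) = real (Suc M) * real (Suc M)" by (simp add: power2_eq_square algebra_simps)
      ultimately have sq: "real (Suc M) * real (Suc M) \<le> 4 * 2 ^ M" by simp
      have "4 \<le> e * real (Suc M)" using M e by (simp add: field_simps)
      from mult_right_mono[OF this, of "real (Suc M)"]
      have "4 * real (Suc M) \<le> e * real (Suc M) * real (Suc M)" by simp
      then have "4 * real (Suc M) \<le> e * (4 * 2 ^ M)" using sq e
        by (smt (verit, ccfv_SIG) mult.assoc mult_left_mono)
      then show ?thesis by (simp add: field_simps)
    qed
    finally show ?thesis .
  qed
  ultimately show "\<exists>T. range phi \<subseteq> T \<and> T \<in> lmeasurable \<and> measure lebesgue T \<le> e" by blast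
qed


lemma inv_int:
  fixes T :: "real set"
  assumes "\<And>x. x \<in> T \<longleftrightarrow> x + 1 \<in> T"
  shows "x \<in> T \<longleftrightarrow> x + real_of_int i \<in> T"
proof (induction i rule: int_induct[where k=0])
  case base then show ?case by simp
next
  case (step1 i) then show ?case using assms[of "x + real_of_int i"] by (simp add: add.assoc)
next
  case (step2 i) then show ?case using assms[of "x + real_of_int (i - 1)"] by (simp add: add.assoc)
qed

lemma inv_pow:
  fixes T :: "real set"
  assumes "\<And>x. x \<in> T \<longleftrightarrow> 2 * x \<in> T"
  shows "x \<in> T \<longleftrightarrow> 2 ^ j * x \<in> T"
proof (induction j)
  case 0 then show ?case by simp
next
  case (Suc j)
  have "2 ^ Suc j * x = 2 * (2 ^ j * x)" by simp
  then show ?case using Suc assms[of "2 ^ j * x"] by (simp only:)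
qed

definition Fy :: "nat \<Rightarrow> int \<Rightarrow> int \<Rightarrow> real set" where
  "Fy j k l = {real_of_int k / 2 ^ j ..< real_of_int l / 2 ^ j}"

lemma Dy_image:
  assumes i2: "\<And>x. x \<in> T \<longleftrightarrow> 2 * x \<in> T" and i1: "\<And>x. x \<in> T \<longleftrightarrow> x + 1 \<in> T"
  shows "T \<inter> Fy j k (k + 1) = (\<lambda>x. (1 / 2 ^ j) *\<^sub>R x + real_of_int k / 2 ^ j) ` (T \<inter> {0..<1})"
proof (intro set_eqI iffI)
  fix y assume y: "y \<in> T \<inter> Fy j k (k + 1)"
  define x where "x = 2 ^ j * y - real_of_int k"
  have "y = (1 / 2 ^ j) *\<^sub>R x + real_of_int k / 2 ^ j" by (simp add: x_def field_simps)
  moreover have "x \<in> T"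
  proof -
    have "y \<in> T" using y by simp
    then have "2 ^ j * y \<in> T" using inv_pow[OF i2] by blast
    then show ?thesis using inv_int[OF i1, of x "k"] by (simp add: x_def)
  qed
  moreover have "x \<in> {0..<1}" using y by (simp add: Fy_def x_def field_simps)
  ultimately show "y \<in> (\<lambda>x. (1 / 2 ^ j) *\<^sub>R x + real_of_int k / 2 ^ j) ` (T \<inter> {0..<1})" by blast
next
  fix y assume "y \<in> (\<lambda>x. (1 / 2 ^ j) *\<^sub>R x + real_of_int k / 2 ^ j) ` (T \<inter> {0..<1})"
  then obtain x where x: "x \<in> T" "0 \<le> x" "x < 1" and y: "y = x / 2 ^ j + real_of_int k / 2 ^ j" by auto
  have "2 ^ j * y = x + real_of_int k" using y by (simp add: field_simps)
  then have "2 ^ j * y \<in> T" using x inv_int[OF i1, of x k] by simp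
  then have "y \<in> T" using inv_pow[OF i2] by blast
  moreover have "y \<in> Fy j k (k + 1)" using x y by (simp add: Fy_def field_simps)
  ultimately show "y \<in> T \<inter> Fy j k (k + 1)" by blast
qed

lemma emeasure_Dy:
  assumes i2: "\<And>x. x \<in> T \<longleftrightarrow> 2 * x \<in> T" and i1: "\<And>x. x \<in> T \<longleftrightarrow> x + 1 \<in> T"
  shows "emeasure lebesgue (T \<inter> Fy j k (k + 1)) = ennreal (1 / 2 ^ j) * emeasure lebesgue (T \<inter> {0..<1})"
  unfolding Dy_image[OF i2 i1] using emeasure_lebesgue_affine[of "1 / 2 ^ j" "real_of_int k / 2 ^ j" "T \<inter> {0..<1}"]
  by simp


lemma Fy_sets[measurable]: "Fy j k l \<in> sets borel" by (simp add: Fy_def)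

lemma Fy_empty: "l \<le> k \<Longrightarrow> Fy j k l = {}"
  by (auto simp: Fy_def divide_right_mono)

lemma emeasure_Fy:
  fixes T :: "real set"
  assumes i2: "\<And>x. x \<in> T \<longleftrightarrow> 2 * x \<in> T" and i1: "\<And>x. x \<in> T \<longleftrightarrow> x + 1 \<in> T"
    and T: "T \<in> sets lebesgue"
  shows "emeasure lebesgue (T \<inter> Fy j k (k + int n)) = ennreal (real n / 2 ^ j) * emeasure lebesgue (T \<inter> {0..<1})"
proof (induction n)
  case 0 then show ?case by (simp add: Fy_empty)
next
  case (Suc n)
  have un: "T \<inter> Fy j k (k + int (Suc n)) = (T \<inter> Fy j k (k + int n)) \<union> (T \<inter> Fy j (k + int n) (k + int n + 1))"
    by (auto simp: Fy_def divide_simps)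
  have dis: "(T \<inter> Fy j k (k + int n)) \<inter> (T \<inter> Fy j (k + int n) (k + int n + 1)) = {}"
    by (auto simp: Fy_def)
  have F: "Fy j a b \<in> sets lebesgue" for a b by (rule sets_completionI_sets) simp
  have m: "T \<inter> Fy j k (k + int n) \<in> sets lebesgue" "T \<inter> Fy j (k + int n) (k + int n + 1) \<in> sets lebesgue"
    by (rule sets.Int[OF T F])+
  have "emeasure lebesgue (T \<inter> Fy j k (k + int (Suc n))) =
      emeasure lebesgue (T \<inter> Fy j k (k + int n)) + emeasure lebesgue (T \<inter> Fy j (k + int n) (k + int n + 1))"
    unfolding un using plus_emeasure[OF m dis] by simp
  also have "\<dots> = ennreal (real n / 2 ^ j) * emeasure lebesgue (T \<inter> {0..<1}) + ennreal (1 / 2 ^ j) * emeasure lebesgue (T \<inter> {0..<1})"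
    using Suc emeasure_Dy[OF i2 i1, of j "k + int n"] by simp
  also have "\<dots> = ennreal (real (Suc n) / 2 ^ j) * emeasure lebesgue (T \<inter> {0..<1})"
    by (simp add: distrib_right[symmetric] ennreal_plus[symmetric] add_divide_distrib add.commute del: ennreal_plus)
  finally show ?case .
qed

lemma Fy_rescale: "Fy j k l = Fy (j + j') (k * 2 ^ j') (l * 2 ^ j')"
  by (simp add: Fy_def power_add field_simps)

lemma div_le_iff2: "real_of_int a / 2 ^ J \<le> real_of_int b / 2 ^ J \<longleftrightarrow> a \<le> b"
  by (simp add: divide_le_cancel)

lemma max_div: "max (real_of_int a / 2 ^ J) (real_of_int b / 2 ^ J) = real_of_int (max a b) / 2 ^ J"
  by (simp add: max_def div_le_iff2)

lemma min_div: "min (real_of_int a / 2 ^ J) (real_of_int b / 2 ^ J) = real_of_int (min a b) / 2 ^ J"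
  by (simp add: min_def div_le_iff2)

definition "Egen = (\<lambda>(j, k, l). Fy j k l) ` UNIV"

lemma Egen_Int_stable: "Int_stable Egen"
proof (rule Int_stableI)
  fix a b assume "a \<in> Egen" "b \<in> Egen"
  then obtain j k l j' k' l' where a: "a = Fy j k l" and b: "b = Fy j' k' l'" by (auto simp: Egen_def)
  have b': "Fy j' k' l' = Fy (j + j') (k' * 2 ^ j) (l' * 2 ^ j)"
    using Fy_rescale[of j' k' l' j] by (simp add: add.commute)
  have "a \<inter> b = Fy (j + j') (max (k * 2 ^ j') (k' * 2 ^ j)) (min (l * 2 ^ j') (l' * 2 ^ j))"
    unfolding a b Fy_rescale[of j k l j'] b'
    by (simp only: Fy_def Int_atLeastLessThan max_div min_div)
  then show "a \<inter> b \<in> Egen" by (auto simp: Egen_def)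
qed

lemma lessThan_Egen: "{..<x} = (\<Union>n::nat. \<Union>j::nat. Fy j (- (int n * 2 ^ j)) \<lfloor>x * 2 ^ j\<rfloor>)"
proof (intro set_eqI iffI)
  fix y assume "y \<in> {..<x}"
  then have yx: "y < x" by simp
  obtain j where j: "(1/2::real) ^ j < x - y" using real_arch_pow_inv[of "x - y" "1/2"] yx by auto
  obtain n :: nat where n: "- y \<le> real n" using real_arch_simple by blast
  have "x * 2 ^ j - 1 < real_of_int \<lfloor>x * 2 ^ j\<rfloor>" by linarith
  then have "(x * 2 ^ j - 1) / 2 ^ j < real_of_int \<lfloor>x * 2 ^ j\<rfloor> / 2 ^ j"
    by (simp add: divide_strict_right_mono)
  moreover have "(x * 2 ^ j - 1) / 2 ^ j = x - 1 / 2 ^ j" by (simp add: field_simps)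
  ultimately have "x - 1 / 2 ^ j < real_of_int \<lfloor>x * 2 ^ j\<rfloor> / 2 ^ j" by simp
  then have "y < real_of_int \<lfloor>x * 2 ^ j\<rfloor> / 2 ^ j" using j by (simp add: power_one_over)
  moreover have "real_of_int (- (int n * 2 ^ j)) / 2 ^ j \<le> y" using n by simp
  ultimately show "y \<in> (\<Union>n::nat. \<Union>j::nat. Fy j (- (int n * 2 ^ j)) \<lfloor>x * 2 ^ j\<rfloor>)"
    by (auto simp: Fy_def)
next
  fix y assume "y \<in> (\<Union>n::nat. \<Union>j::nat. Fy j (- (int n * 2 ^ j)) \<lfloor>x * 2 ^ j\<rfloor>)"
  then obtain j n where "y \<in> Fy j (- (int n * 2 ^ j)) \<lfloor>x * 2 ^ j\<rfloor>" by blast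
  then have "y < real_of_int \<lfloor>x * 2 ^ j\<rfloor> / 2 ^ j" by (simp add: Fy_def)
  also have "\<dots> \<le> x" by (simp add: divide_le_eq)
  finally show "y \<in> {..<x}" by simp
qed

lemma borel_Egen: "borel = sigma UNIV Egen"
  unfolding Egen_def
proof (rule borel_eq_sigmaI1[OF borel_Iio])
  fix X :: "real set" assume "X \<in> range lessThan"
  then obtain x where X: "X = {..<x}" by blast
  show "X \<in> sets (sigma UNIV ((\<lambda>(j, k, l). Fy j k l) ` UNIV))"
  proof -
    have ss: "sets (sigma UNIV ((\<lambda>(j, k, l). Fy j k l) ` UNIV)) = sigma_sets UNIV ((\<lambda>(j, k, l). Fy j k l) ` UNIV)"
      by (rule sets_measure_of) simp
    show ?thesis
    unfolding X lessThan_Egen ss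
    by (intro sigma_sets.Union sigma_sets.Basic) (auto intro!: image_eqI[of _ _ "(j, k, l)" for j k l])
  qed
qed (auto simp: Fy_def)


lemma sets_Egen: "sets borel = sigma_sets UNIV Egen"
proof -
  have "sets (borel :: real measure) = sets (sigma UNIV Egen)" using borel_Egen by simp
  also have "\<dots> = sigma_sets UNIV Egen" by (rule sets_measure_of) simp
  finally show ?thesis .
qed

lemma zero_one:
  fixes T :: "real set"
  assumes T: "T \<in> sets lebesgue"
    and i2: "\<And>x. x \<in> T \<longleftrightarrow> 2 * x \<in> T" and i1: "\<And>x. x \<in> T \<longleftrightarrow> x + 1 \<in> T"
  shows "T \<inter> {0..<1} \<in> null_sets lebesgue \<or> {0..<1} - T \<in> null_sets lebesgue"
proof -
  define a where "a = emeasure lebesgue (T \<inter> {0..<1})"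
  obtain S N N' where TS: "T = S \<union> N" and NN: "N \<subseteq> N'" and N': "N' \<in> null_sets lborel" and S: "S \<in> sets lborel"
    using T by (rule sets_completionE)
  have Sb[measurable]: "S \<in> sets borel" using S by simp
  have SX: "emeasure lborel (S \<inter> X) = emeasure lebesgue (T \<inter> X)" if X: "X \<in> sets borel" for X
  proof -
    have "N \<inter> X \<in> null_sets lebesgue"
      using null_sets_completion_subset[OF _ null_sets_completionI[OF N'], of "N \<inter> X"] NN by auto
    moreover have "S \<inter> X \<in> sets lebesgue" using S X by auto
    ultimately have "emeasure lebesgue (T \<inter> X) = emeasure lebesgue (S \<inter> X)"
      using emeasure_Un_null_set[of "S \<inter> X" lebesgue "N \<inter> X"] TS by (simp add: Int_Un_distrib2)
    also have "\<dots> = emeasure lborel (S \<inter> X)" using S X by simp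
    finally show ?thesis by simp
  qed
  define M1 where "M1 = density (lborel :: real measure) (indicator S)"
  define M2 where "M2 = density (lborel :: real measure) (\<lambda>_. a)"
  have M1X: "emeasure M1 X = emeasure lborel (S \<inter> X)" if "X \<in> sets borel" for X
  proof -
    have "emeasure M1 X = (\<integral>\<^sup>+ x. indicator S x * indicator X x \<partial>lborel)"
      unfolding M1_def using that by (subst emeasure_density) auto
    also have "\<dots> = (\<integral>\<^sup>+ x. indicator (S \<inter> X) x \<partial>lborel)" by (simp add: indicator_inter_arith)
    also have "\<dots> = emeasure lborel (S \<inter> X)" using that by simp
    finally show ?thesis .
  qed
  have M2X: "emeasure M2 X = a * emeasure lborel X" if "X \<in> sets borel" for X
    unfolding M2_def using that by (simp add: emeasure_density_const)
  have gen: "emeasure M1 X = emeasure M2 X" if "X \<in> Egen" for X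
  proof -
    obtain j k l where X: "X = Fy j k l" using \<open>X \<in> Egen\<close> by (auto simp: Egen_def)
    show ?thesis
    proof (cases "k \<le> l")
      case False
      then show ?thesis using X Fy_empty[of l k j] M1X M2X by simp
    next
      case True
      then obtain n where l: "l = k + int n" using zle_iff_zadd by blast
      have "emeasure M1 X = ennreal (real n / 2 ^ j) * a"
        using M1X[of X] SX[of X] emeasure_Fy[OF i2 i1 T, of j k n] X l by (simp add: a_def)
      moreover have "emeasure lborel X = ennreal (real n / 2 ^ j)"
        using X l by (simp add: Fy_def divide_right_mono diff_divide_distrib[symmetric])
      ultimately show ?thesis using M2X[of X] X by (simp add: mult.commute)
    qed
  qed
  define A where "A i = Fy 0 (int_decode i) (int_decode i + 1)" for i
  have "M1 = M2"
  proof (rule measure_eqI_generator_eq[OF Egen_Int_stable _ gen _ _ _ _])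
    show "Egen \<subseteq> Pow UNIV" by simp
    show "sets M1 = sigma_sets UNIV Egen" unfolding M1_def using sets_Egen by simp
    show "sets M2 = sigma_sets UNIV Egen" unfolding M2_def using sets_Egen by simp
    show "range A \<subseteq> Egen" by (auto simp: A_def Egen_def)
    show "(\<Union>i. A i) = UNIV"
    proof (intro set_eqI iffI)
      fix y :: real
      have "y \<in> A (int_encode \<lfloor>y\<rfloor>)" by (simp add: A_def Fy_def)
      then show "y \<in> (\<Union>i. A i)" by blast
    qed auto
    fix i
    have "emeasure M1 (A i) \<le> emeasure lborel (A i)"
      using M1X[of "A i"] by (simp add: A_def emeasure_mono)
    also have "\<dots> = 1" by (simp add: A_def Fy_def)
    finally have "emeasure M1 (A i) \<le> 1" .
    then show "emeasure M1 (A i) \<noteq> \<infinity>" using ennreal_one_less_top by (metis infinity_ennreal_def linorder_not_le)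
  qed
  have I[measurable]: "{0..<1::real} \<in> sets borel" by simp
  have "emeasure M1 (S \<inter> {0..<1}) = a"
    using M1X[of "S \<inter> {0..<1}"] SX[of "{0..<1}"] by (simp add: a_def Int_assoc[symmetric])
  moreover have "emeasure M2 (S \<inter> {0..<1}) = a * a"
    using M2X[of "S \<inter> {0..<1}"] SX[of "{0..<1}"] by (simp add: a_def)
  ultimately have aa: "a = a * a" using \<open>M1 = M2\<close> by simp
  have "a \<le> emeasure lebesgue {0..<1::real}" unfolding a_def by (rule emeasure_mono) auto
  then have a1: "a \<le> 1" by simp
  then obtain r where r: "a = ennreal r" "0 \<le> r" by (metis ennreal_cases ennreal_one_less_top not_le top_greatest)
  have "r = r * r" using aa r by (simp add: ennreal_mult[symmetric])
  then have "r = 0 \<or> r = 1" by (metis mult_cancel_right1 mult_zero_left)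
  then show ?thesis
  proof
    assume "r = 0"
    then have "emeasure lebesgue (T \<inter> {0..<1}) = 0" using r a_def by simp
    moreover have "T \<inter> {0..<1} \<in> sets lebesgue" using T by auto
    ultimately show ?thesis by (simp add: null_sets_def)
  next
    assume "r = 1"
    then have e: "emeasure lebesgue (T \<inter> {0..<1}) = 1" using r a_def by simp
    have Tm: "T \<inter> {0..<1} \<in> sets lebesgue" using T by auto
    have "{0..<1} - T = {0..<1} - (T \<inter> {0..<1})" by auto
    moreover have "emeasure lebesgue ({0..<1} - (T \<inter> {0..<1})) = emeasure lebesgue {0..<1::real} - emeasure lebesgue (T \<inter> {0..<1})"
      by (rule emeasure_Diff) (use e Tm in auto)
    ultimately have "emeasure lebesgue ({0..<1} - T) = 0" using e by simp
    moreover have "{0..<1} - T \<in> sets lebesgue" using T by auto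
    ultimately show ?thesis by (simp add: null_sets_def)
  qed
qed


lemma cnull: "countable A \<Longrightarrow> A \<in> null_sets lebesgue"
  by (intro null_sets_completionI countable_imp_null_set_lborel)

lemma nsub: "A \<in> null_sets lebesgue \<Longrightarrow> B \<subseteq> A \<Longrightarrow> B \<in> null_sets lebesgue"
  by (rule null_sets_completion_subset)

lemma I_not_null: "{0..<1::real} \<notin> null_sets lebesgue"
proof
  assume "{0..<1::real} \<in> null_sets lebesgue"
  then have "emeasure lebesgue {0..<1::real} = 0" by auto
  moreover have "emeasure lebesgue {0..<1::real} = 1" by simp
  ultimately show False by simp
qed

theorem mainTheorem14:
  shows "\<exists>L :: real set. L \<in> sets lebesgue \<and> turing_closure L \<notin> sets lebesgue"
proof (rule ccontr)
  assume "\<not> ?thesis"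
  then have H: "\<And>L. L \<in> sets lebesgue \<Longrightarrow> turing_closure L \<in> sets lebesgue" by blast
  define X where "X = {x. x \<notin> \<rat> \<and> phi x \<notin> \<rat>}"
  define N where "N = phi ` X"
  define R where "R = turing_closure N"
  define I where "I = {0..<1::real}"
  have Nnull: "N \<in> null_sets lebesgue" unfolding N_def by (rule nsub[OF range_phi_null]) auto
  have XR: "X \<subseteq> R"
  proof
    fix x assume "x \<in> X"
    then have "turing_equiv_real x (phi x)" "phi x \<in> N" by (auto simp: X_def N_def intro: teq_phi)
    then show "x \<in> R" by (auto simp: R_def turing_closure_def)
  qed
  have compR: "UNIV - R \<in> null_sets lebesgue"
  proof -
    have "UNIV - R \<subseteq> \<rat> \<union> {x. phi x \<in> \<rat>}" using XR by (auto simp: X_def)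
    moreover have "countable (\<rat> \<union> {x. phi x \<in> \<rat>})" by (simp add: countable_rat countable_phi_rat)
    ultimately show ?thesis using cnull nsub by meson
  qed
  define sig where "sig y = (SOME z. z \<in> N \<and> turing_equiv_real y z)" for y
  have sig: "sig y \<in> N \<and> turing_equiv_real y (sig y)" if "y \<in> R" for y
  proof -
    have "\<exists>z. z \<in> N \<and> turing_equiv_real y z" using that by (auto simp: R_def turing_closure_def)
    then show ?thesis unfolding sig_def by (rule someI_ex)
  qed
  have sig_cong: "sig y = sig y'" if "turing_equiv_real y y'" for y y'
  proof -
    have "(\<lambda>z. z \<in> N \<and> turing_equiv_real y z) = (\<lambda>z. z \<in> N \<and> turing_equiv_real y' z)"
    proof (rule ext)
      fix z
      show "(z \<in> N \<and> turing_equiv_real y z) = (z \<in> N \<and> turing_equiv_real y' z)"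
        using teq_trans[OF teq_sym[OF that], of z] teq_trans[OF that, of z] by blast
    qed
    then show ?thesis unfolding sig_def by simp
  qed
  have R_cong: "y' \<in> R" if yR: "y \<in> R" and ye: "turing_equiv_real y y'" for y y'
  proof -
    obtain x where "x \<in> N" "turing_equiv_real y x" using yR unfolding R_def turing_closure_def by blast
    then have "turing_equiv_real y' x" using teq_trans[OF teq_sym[OF ye]] by blast
    then show ?thesis using \<open>x \<in> N\<close> by (auto simp: R_def turing_closure_def)
  qed
  define TD where "TD D = {y \<in> R. sig y \<in> D}" for D
  have TD_cl: "TD D = turing_closure (sig ` R \<inter> D)" for D
  proof (intro set_eqI iffI)
    fix y assume "y \<in> TD D"
    then have "y \<in> R" "sig y \<in> D" by (auto simp: TD_def)
    then show "y \<in> turing_closure (sig ` R \<inter> D)" using sig[of y] by (auto simp: turing_closure_def)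
  next
    fix y assume "y \<in> turing_closure (sig ` R \<inter> D)"
    then obtain w where w: "w \<in> R" "sig w \<in> D" "turing_equiv_real y (sig w)" by (auto simp: turing_closure_def)
    have "turing_equiv_real y w" using teq_trans[OF w(3) teq_sym] sig[OF w(1)] by blast
    then have "y \<in> R" "sig y = sig w" using R_cong[OF w(1) teq_sym] sig_cong by blast+
    then show "y \<in> TD D" using w by (simp add: TD_def)
  qed
  have TD_meas: "TD D \<in> sets lebesgue" for D
  proof -
    have "sig ` R \<inter> D \<subseteq> N" using sig by auto
    then have "sig ` R \<inter> D \<in> null_sets lebesgue" using nsub[OF Nnull] by blast
    then show ?thesis unfolding TD_cl by (intro H) auto
  qed
  have TD_inv: "y \<in> TD D \<longleftrightarrow> y' \<in> TD D" if "turing_equiv_real y y'" for y y' D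
    using R_cong[OF _ that] R_cong[OF _ teq_sym[OF that]] sig_cong[OF that] unfolding TD_def by auto
  have Z: "TD D \<inter> I \<in> null_sets lebesgue \<or> I - TD D \<in> null_sets lebesgue" for D
    unfolding I_def
  proof (rule zero_one[OF TD_meas])
    fix x :: real
    show "x \<in> TD D \<longleftrightarrow> 2 * x \<in> TD D" using TD_inv[OF equiv_double[of x]] by simp
    show "x \<in> TD D \<longleftrightarrow> x + 1 \<in> TD D" using TD_inv[OF equiv_plus1[of x]] by simp
  qed
  have sig01: "0 \<le> sig y \<and> sig y \<le> 1" if "y \<in> R" for y
    using sig[OF that] phi_nonneg phi_le1 by (auto simp: N_def)
  have Inn: "I \<notin> null_sets lebesgue" using I_not_null by (simp add: I_def)
  define Ss where "Ss = {t. TD {..<t} \<inter> I \<in> null_sets lebesgue}"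
  have "0 \<in> Ss"
  proof -
    have "TD {..<0} = {}" using sig01 by (force simp: TD_def)
    then show ?thesis by (simp add: Ss_def)
  qed
  have Ss_le: "t \<le> 1" if "t \<in> Ss" for t
  proof (rule ccontr)
    assume "\<not> t \<le> 1"
    then have "TD {..<t} = R" using sig01 by (force simp: TD_def)
    then have "R \<inter> I \<in> null_sets lebesgue" using that by (simp add: Ss_def)
    moreover have "I \<subseteq> (R \<inter> I) \<union> (UNIV - R)" by auto
    ultimately have "I \<in> null_sets lebesgue" using compR nsub by blast
    then show False using Inn by simp
  qed
  have bdd: "bdd_above Ss" by (rule bdd_aboveI[of _ 1]) (rule Ss_le)
  define t where "t = Sup Ss"
  have lower: "TD {..<t} \<inter> I \<in> null_sets lebesgue"
  proof -
    have sub: "TD {..<t} \<inter> I \<subseteq> (\<Union>n. TD {..<t - 1 / Suc n} \<inter> I)"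
    proof
      fix y assume y: "y \<in> TD {..<t} \<inter> I"
      then have "sig y < t" by (simp add: TD_def)
      then obtain n :: nat where "1 / Suc n < t - sig y" using reals_Archimedean[of "t - sig y"]
        by (auto simp: inverse_eq_divide)
      then show "y \<in> (\<Union>n. TD {..<t - 1 / Suc n} \<inter> I)" using y by (intro UN_I[of n]) (auto simp: TD_def)
    qed
    have nn: "TD {..<t - 1 / Suc n} \<inter> I \<in> null_sets lebesgue" for n
    proof -
      have "t - 1 / Suc n < t" by simp
      then obtain s where s: "s \<in> Ss" "t - 1 / Suc n < s" using less_cSup_iff[OF _ bdd] \<open>0 \<in> Ss\<close> unfolding t_def by blast
      have "TD {..<t - 1 / Suc n} \<inter> I \<subseteq> TD {..<s} \<inter> I" using s by (auto simp: TD_def)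
      then show ?thesis using s nsub by (auto simp: Ss_def)
    qed
    have "(\<Union>n. TD {..<t - 1 / Suc n} \<inter> I) \<in> null_sets lebesgue" by (rule null_sets_UN) (rule nn)
    from nsub[OF this sub] show ?thesis .
  qed
  have upper: "TD {t<..} \<inter> I \<in> null_sets lebesgue"
  proof -
    have sub: "TD {t<..} \<inter> I \<subseteq> (\<Union>n. I - TD {..<t + 1 / Suc n})"
    proof
      fix y assume y: "y \<in> TD {t<..} \<inter> I"
      then have "t < sig y" by (simp add: TD_def)
      then obtain n :: nat where "1 / Suc n < sig y - t" using reals_Archimedean[of "sig y - t"]
        by (auto simp: inverse_eq_divide)
      then show "y \<in> (\<Union>n. I - TD {..<t + 1 / Suc n})" using y by (intro UN_I[of n]) (auto simp: TD_def)
    qed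
    have nn: "I - TD {..<t + 1 / Suc n} \<in> null_sets lebesgue" for n
    proof -
      have "t + 1 / Suc n \<notin> Ss"
      proof
        assume "t + 1 / Suc n \<in> Ss"
        then have "t + 1 / Suc n \<le> t" unfolding t_def using cSup_upper[OF _ bdd] by blast
        then show False by simp
      qed
      then show ?thesis using Z[of "{..<t + 1 / Suc n}"] by (simp add: Ss_def)
    qed
    have "(\<Union>n. I - TD {..<t + 1 / Suc n}) \<in> null_sets lebesgue" by (rule null_sets_UN) (rule nn)
    from nsub[OF this sub] show ?thesis .
  qed
  have mid: "TD {t} \<inter> I \<in> null_sets lebesgue"
  proof -
    have "TD {t} \<inter> I \<subseteq> {y. turing_equiv_real y t}" using sig by (auto simp: TD_def)
    then show ?thesis using cnull[OF countable_class] nsub by blast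
  qed
  have "I \<subseteq> (UNIV - R) \<union> (TD {..<t} \<inter> I) \<union> (TD {t} \<inter> I) \<union> (TD {t<..} \<inter> I)"
    by (auto simp: TD_def)
  moreover have "(UNIV - R) \<union> (TD {..<t} \<inter> I) \<union> (TD {t} \<inter> I) \<union> (TD {t<..} \<inter> I) \<in> null_sets lebesgue"
    by (intro null_sets.Un compR lower mid upper)
  ultimately have "I \<in> null_sets lebesgue" using nsub by blast
  then show False using Inn by simp
qed

end
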